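(* Let $p$ be an odd prime and $n\ge2$ an integer with base-$p$ expansion $n=n_0+n_1p+\cdots+n_kp^k$, $n_j\in\{0,\ldots,p-1\}$, $n_k>0$. Define \[ P:=\{b_0+b_1p+\cdots+b_kp^k: 0\le b_j\le n_j,\ j=0,\ldots,k\}\setminus\{n\}, \] a subset of $\{0,1,\ldots,n-1\}$ with $|P|=\prod_{j=0}^k(n_j+1)-1$. For a pseudo-composition $\beta=(\beta_1,\ldots,\beta_\ell)$ of $n$ write $\beta_i=\sum_{j=0}^k\beta_{ij}p^j$ with digits $\beta_{ij}\in\{0,\ldots,p-1\}$. For $T\subseteq P$ define \[ r^B(T):=\sum_{\substack{\beta\models_0 n,\ D(\beta)\subseteq T\\ \beta_{1j}+\cdots+\beta_{\ell j}=n_j\ \forall j}}(-1)^{|T|-|D(\beta)|}\prod_{j=0}^k 2^{\,n_j-\beta_{1j}}\binom{n_j}{\beta_{1j},\ldots,\beta_{\ell j}}. \] Then for every $i\in\mathbb{Z}_p$, \[ c^B_{p,i}(n)=\begin{cases} 2^{\,n+1-\prod_{j}(n_j+1)}\,|\{T\subseteq P: r^B(T)\equiv i\pmod p\}| & \text{if } i=0 \text{ or } n_0=\cdots=n_{k-1}=p-1,\\ 2^{\,n-\prod_j(n_j+1)}\,|\{T\subseteq P: r^B(T)\equiv i\text{ or } r^B(T)\equiv -i\pmod p\}| & \text{otherwise.}\end{cases} \]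
   Context: A signed permutation of $[n]$ is a bijection $w$ of $\{\pm1,\ldots,\pm n\}$ with $w(-i)=-w(i)$; these form $\mathfrak{S}^B_n$. With $w(0):=0$, $D(w)=\{i\in\{0,\ldots,n-1\}: w(i)>w(i+1)\}$. A pseudo-composition of $n$ ($\alpha\models_0 n$) is a sequence $(\alpha_1,\ldots,\alpha_\ell)$ of integers with $\alpha_1\ge0$, $\alpha_2,\ldots,\alpha_\ell>0$ and sum $n$, with $D(\alpha)=\{\alpha_1,\alpha_1+\alpha_2,\ldots,\alpha_1+\cdots+\alpha_{\ell-1}\}\subseteq\{0,\ldots,n-1\}$. The type $B$ ribbon number is $r^B_\alpha=|\{w\in\mathfrak{S}^B_n: D(w)=D(\alpha)\}|$ and $c^B_{p,i}(n)=|\{\alpha\models_0 n: r^B_\alpha\equiv i\pmod p\}|$. Multinomial coefficients $\binom{m}{m_1,\ldots,m_k}$ equal $m!/(m_1!\cdots m_k!)$ if $\sum m_i=m$ and $0$ otherwise. *)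

theory Defs
  imports "HOL-Computational_Algebra.Primes" "HOL-Number_Theory.Cong"
begin

text \<open>Signed permutations of [n]: bijections of {+-1,...,+-n} with w(-i) = -w(i),
  extended by the identity outside (so w 0 = 0).\<close>
definition signed_perms :: "nat \<Rightarrow> (int \<Rightarrow> int) set" where
  "signed_perms n = {w. bij_betw w ({- int n .. int n} - {0}) ({- int n .. int n} - {0})
      \<and> (\<forall>i. w (- i) = - w i)
      \<and> (\<forall>i. i \<notin> {- int n .. int n} - {0} \<longrightarrow> w i = i)}"

definition sdes :: "nat \<Rightarrow> (int \<Rightarrow> int) \<Rightarrow> nat set" where
  "sdes n w = {i. i < n \<and> w (int i) > w (int i + 1)}"

definition pseudo_comp :: "nat \<Rightarrow> nat list \<Rightarrow> bool" where
  "pseudo_comp n \<alpha> \<longleftrightarrow> \<alpha> \<noteq> [] \<and> (\<forall>x\<in>set (tl \<alpha>). 0 < x) \<and> sum_list \<alpha> = n"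

definition comp_des :: "nat list \<Rightarrow> nat set" where
  "comp_des \<alpha> = {sum_list (take j \<alpha>) | j. 1 \<le> j \<and> j < length \<alpha>}"

definition ribbonB :: "nat \<Rightarrow> nat list \<Rightarrow> nat" where
  "ribbonB n \<alpha> = card {w \<in> signed_perms n. sdes n w = comp_des \<alpha>}"

definition cB :: "nat \<Rightarrow> int \<Rightarrow> nat \<Rightarrow> nat" where
  "cB p i n = card {\<alpha>. pseudo_comp n \<alpha> \<and> [int (ribbonB n \<alpha>) = i] (mod int p)}"

definition multinomial :: "nat \<Rightarrow> nat list \<Rightarrow> nat" where
  "multinomial m ms = (if sum_list ms = m then fact m div prod_list (map fact ms) else 0)"

definition dig :: "nat \<Rightarrow> nat \<Rightarrow> nat \<Rightarrow> nat" where
  "dig p m j = m div p ^ j mod p"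

definition Pset :: "nat \<Rightarrow> nat \<Rightarrow> nat \<Rightarrow> nat set" where
  "Pset p k n = {(\<Sum>j\<le>k. b j * p ^ j) | b. \<forall>j\<le>k. b j \<le> dig p n j} - {n}"

definition rBT :: "nat \<Rightarrow> nat \<Rightarrow> nat \<Rightarrow> nat set \<Rightarrow> int" where
  "rBT p k n T = (\<Sum>\<beta>\<in>{\<beta>. pseudo_comp n \<beta> \<and> comp_des \<beta> \<subseteq> T
        \<and> (\<forall>j\<le>k. (\<Sum>x\<leftarrow>\<beta>. dig p x j) = dig p n j)}.
     (-1) ^ (card T - card (comp_des \<beta>)) *
     (\<Prod>j\<le>k. 2 ^ (dig p n j - dig p (hd \<beta>) j)
                * int (multinomial (dig p n j) (map (\<lambda>x. dig p x j) \<beta>))))"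

end

theory Submission
  imports Defs "HOL-Number_Theory.Residues" "HOL-Library.FuncSet"
begin

lemma dig_0: "dig p m 0 = m mod p"
  by (simp add: dig_def)

lemma dig_Suc: "dig p m (Suc j) = dig p (m div p) j"
  by (simp add: dig_def div_mult2_eq power_Suc mult.commute)

lemma dig_less: "0 < p \<Longrightarrow> dig p m j < p"
  by (simp add: dig_def)

lemma dig_expansion:
  assumes "1 < p" "m < p ^ Suc K"
  shows "m = (\<Sum>j\<le>K. dig p m j * p ^ j)"
  using assms(2)
proof (induction K arbitrary: m)
  case 0
  then show ?case by (simp add: dig_def)
next
  case (Suc K)
  have "m div p < p ^ Suc K"
    using Suc.prems assms(1) by (simp add: div_less_iff_less_mult mult.commute)
  then have IH: "m div p = (\<Sum>j\<le>K. dig p (m div p) j * p ^ j)" by (rule Suc.IH)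
  have "(\<Sum>j\<le>Suc K. dig p m j * p ^ j) = dig p m 0 + (\<Sum>j\<le>K. dig p m (Suc j) * p ^ Suc j)"
    by (simp only: sum.atMost_Suc_shift) simp
  also have "\<dots> = m mod p + p * (\<Sum>j\<le>K. dig p (m div p) j * p ^ j)"
    by (simp add: dig_Suc dig_0 sum_distrib_left mult_ac)
  also have "\<dots> = m" using IH by simp
  finally show ?case by simp
qed

lemma dig_unique:
  assumes "1 < p" "\<forall>j\<le>K. e j < p" "i \<le> K"
  shows "dig p (\<Sum>j\<le>K. e j * p ^ j) i = e i"
  using assms(2,3)
proof (induction K arbitrary: e i)
  case 0
  then show ?case by (simp add: dig_def)
next
  case (Suc K)
  have eq: "(\<Sum>j\<le>Suc K. e j * p ^ j) = e 0 + p * (\<Sum>j\<le>K. e (Suc j) * p ^ j)"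
    by (simp only: sum.atMost_Suc_shift) (simp add: sum_distrib_left mult_ac)
  show ?case
  proof (cases i)
    case 0
    then show ?thesis unfolding eq using Suc.prems assms(1) by (simp add: dig_0)
  next
    case (Suc i')
    have "dig p (\<Sum>j\<le>Suc K. e j * p ^ j) i = dig p (\<Sum>j\<le>K. e (Suc j) * p ^ j) i'"
      unfolding eq using Suc.prems assms(1) Suc by (simp add: dig_Suc)
    also have "\<dots> = e (Suc i')"
      using Suc.prems Suc by (intro Suc.IH) auto
    finally show ?thesis using Suc by simp
  qed
qed

lemma choose_pm1:
  assumes "prime p" "d < p"
  shows "[int (p - 1 choose d) = (-1) ^ d] (mod int p)"
  using assms(2)
proof (induction d)
  case 0
  then show ?case by simp
next
  case (Suc d)
  have p0: "p > 1" using assms(1) prime_gt_1_nat by blast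
  have "p dvd (p choose Suc d)"
    using Suc.prems assms(1) p0 by (intro dvd_choose_prime) auto
  moreover have "p choose Suc d = (p - 1 choose d) + (p - 1 choose Suc d)"
    using p0 by (metis Suc_diff_1 binomial_Suc_Suc less_trans zero_less_one)
  ultimately have "[int (p - 1 choose Suc d) = - int (p - 1 choose d)] (mod int p)"
    by (simp add: cong_iff_dvd_diff)
       (metis add.commute int_dvd_int_iff of_nat_add)
  moreover have "[- int (p - 1 choose d) = - ((-1) ^ d)] (mod int p)"
    using Suc by (simp add: cong_minus_minus_iff)
  ultimately show ?case
    using cong_trans by fastforce
qed


lemma Suc_mod_div_cases:
  assumes "1 < (p::nat)"
  shows "(Suc (m mod p) < p \<and> Suc m mod p = Suc (m mod p) \<and> Suc m div p = m div p)
       \<or> (Suc (m mod p) = p \<and> Suc m mod p = 0 \<and> Suc m div p = Suc (m div p))"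
proof (cases "Suc (m mod p) = p")
  case True
  then show ?thesis using assms by (simp add: mod_Suc div_Suc)
next
  case False
  have "m mod p < p" using assms by simp
  with False have "Suc (m mod p) < p" by linarith
  then show ?thesis using False assms by (simp add: mod_Suc div_Suc)
qed

lemma lucas_step:
  assumes "prime p"
  shows "[int (m choose r) = int (m mod p choose r mod p) * int (m div p choose r div p)] (mod int p)"
proof (induction m arbitrary: r)
  case 0
  have p1: "1 < p" using assms prime_gt_1_nat by blast
  show ?case
  proof (cases "r = 0")
    case True then show ?thesis by simp
  next
    case False
    have "r mod p \<noteq> 0 \<or> r div p \<noteq> 0"
    proof (rule ccontr)
      assume "\<not> (r mod p \<noteq> 0 \<or> r div p \<noteq> 0)"
      then have "r div p = 0" "r mod p = 0" by simp_all
      then show False using False div_mult_mod_eq[of r p] by simp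
    qed
    then have X: "int (0 choose r mod p) * int (0 choose r div p) = 0" by (auto simp: binomial_eq_0)
    have Y: "int (0 choose r) = 0" using False by (simp add: binomial_eq_0)
    have e: "int (0 choose r) = int (0 mod p choose r mod p) * int (0 div p choose r div p)"
      by (simp only: X Y mod_0 div_0)
    show ?thesis unfolding e by (rule cong_refl)
  qed
next
  case (Suc m)
  have p1: "1 < p" using assms prime_gt_1_nat by blast
  show ?case
  proof (cases r)
    case 0
    then show ?thesis by simp
  next
    case (Suc r')
    define b where "b = m mod p"
    define q where "q = m div p"
    define d where "d = r' mod p"
    define c where "c = r' div p"
    have IH1: "[int (m choose Suc r') = int (m mod p choose Suc r' mod p) * int (m div p choose Suc r' div p)] (mod int p)"
      by (rule Suc.IH)
    have IH2: "[int (m choose r') = int (b choose d) * int (q choose c)] (mod int p)"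
      unfolding b_def d_def q_def c_def by (rule Suc.IH)
    have split: "int (Suc m choose Suc r') = int (m choose r') + int (m choose Suc r')"
      by simp
    have bp: "b < p" "d < p" using p1 by (auto simp: b_def d_def)
    from Suc_mod_div_cases[OF p1, of m] Suc_mod_div_cases[OF p1, of r']
    show ?thesis
    proof (elim disjE conjE)
      assume b1: "Suc (m mod p) < p" "Suc m mod p = Suc (m mod p)" "Suc m div p = m div p"
        and d1: "Suc (r' mod p) < p" "Suc r' mod p = Suc (r' mod p)" "Suc r' div p = r' div p"
      have "[int (Suc m choose Suc r') = int (b choose d) * int (q choose c) + int (b choose Suc d) * int (q choose c)] (mod int p)"
        unfolding split using IH1 IH2 b1 d1 by (intro cong_add) (auto simp: b_def q_def c_def d_def)
      then show ?thesis using b1 d1 Suc by (simp add: b_def q_def c_def d_def algebra_simps)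
    next
      assume b1: "Suc (m mod p) < p" "Suc m mod p = Suc (m mod p)" "Suc m div p = m div p"
        and d1: "Suc (r' mod p) = p" "Suc r' mod p = 0" "Suc r' div p = Suc (r' div p)"
      have z: "b choose d = 0" using b1 d1 by (simp add: b_def d_def)
      have "[int (Suc m choose Suc r') = int (b choose d) * int (q choose c) + int (q choose Suc c)] (mod int p)"
        unfolding split using IH1 IH2 b1 d1 by (intro cong_add) (auto simp: b_def q_def c_def d_def)
      then have "[int (Suc m choose Suc r') = int (q choose Suc c)] (mod int p)" using z by simp
      moreover have "int (Suc m mod p choose r mod p) * int (Suc m div p choose r div p) = int (q choose Suc c)"
        using b1 d1 Suc by (simp add: q_def c_def)
      ultimately show ?thesis using Suc by simp
    next
      assume b1: "Suc (m mod p) = p" "Suc m mod p = 0" "Suc m div p = Suc (m div p)"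
        and d1: "Suc (r' mod p) < p" "Suc r' mod p = Suc (r' mod p)" "Suc r' div p = r' div p"
      have bb: "b = p - 1" using b1 by (simp add: b_def)
      have "[int (Suc m choose Suc r') = int (b choose d) * int (q choose c) + int (b choose Suc d) * int (q choose c)] (mod int p)"
        unfolding split using IH1 IH2 b1 d1 by (intro cong_add) (auto simp: b_def q_def c_def d_def)
      moreover have "[int (b choose d) * int (q choose c) + int (b choose Suc d) * int (q choose c)
           = (-1)^d * int (q choose c) + (-1) ^ Suc d * int (q choose c)] (mod int p)"
        unfolding bb using choose_pm1[OF assms, of d] choose_pm1[OF assms, of "Suc d"] d1 bp
        by (intro cong_add cong_mult cong_refl) (auto simp: d_def)
      ultimately have "[int (Suc m choose Suc r') = 0] (mod int p)"
        by (auto elim: cong_trans)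
      then show ?thesis using b1 d1 Suc by simp
    next
      assume b1: "Suc (m mod p) = p" "Suc m mod p = 0" "Suc m div p = Suc (m div p)"
        and d1: "Suc (r' mod p) = p" "Suc r' mod p = 0" "Suc r' div p = Suc (r' div p)"
      have bb: "b = d" using b1 d1 by (simp add: b_def d_def)
      have "[int (Suc m choose Suc r') = int (b choose d) * int (q choose c) + int (q choose Suc c)] (mod int p)"
        unfolding split using IH1 IH2 b1 d1 by (intro cong_add) (auto simp: b_def q_def c_def d_def)
      then have "[int (Suc m choose Suc r') = int (q choose c) + int (q choose Suc c)] (mod int p)" using bb by simp
      moreover have "int (Suc m mod p choose r mod p) * int (Suc m div p choose r div p) = int (q choose c) + int (q choose Suc c)"
        using b1 d1 Suc by (simp add: q_def c_def)
      ultimately show ?thesis using Suc by simp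
    qed
  qed
qed

lemma lucas:
  assumes "prime p" "m < p ^ Suc K" "r < p ^ Suc K"
  shows "[int (m choose r) = (\<Prod>j\<le>K. int (dig p m j choose dig p r j))] (mod int p)"
  using assms(2,3)
proof (induction K arbitrary: m r)
  case 0
  then show ?case using lucas_step[OF assms(1), of m r] by (simp add: dig_def)
next
  case (Suc K)
  have p1: "1 < p" using assms prime_gt_1_nat by blast
  have a: "m div p < p ^ Suc K" "r div p < p ^ Suc K"
    using Suc.prems p1 by (simp_all add: div_less_iff_less_mult mult.commute)
  have "[int (m choose r) = int (m mod p choose r mod p) * int (m div p choose r div p)] (mod int p)"
    by (rule lucas_step[OF assms(1)])
  also have "[int (m mod p choose r mod p) * int (m div p choose r div p) =
     int (m mod p choose r mod p) * (\<Prod>j\<le>K. int (dig p (m div p) j choose dig p (r div p) j))] (mod int p)"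
    by (intro cong_mult cong_refl Suc.IH a)
  also have "int (m mod p choose r mod p) * (\<Prod>j\<le>K. int (dig p (m div p) j choose dig p (r div p) j))
      = (\<Prod>j\<le>Suc K. int (dig p m j choose dig p r j))"
    by (simp only: prod.atMost_Suc_shift) (simp add: dig_0 dig_Suc)
  finally show ?case .
qed


fun mn :: "nat list \<Rightarrow> nat" where
  "mn [] = 1"
| "mn (x # xs) = (x + sum_list xs choose x) * mn xs"

lemma mn_fact: "fact (sum_list xs) = mn xs * prod_list (map fact xs)"
proof (induction xs)
  case Nil
  then show ?case by simp
next
  case (Cons x xs)
  have "fact (x + sum_list xs) = (x + sum_list xs choose x) * fact x * fact (sum_list xs)"
    using binomial_fact_lemma[of x "x + sum_list xs"] by (simp add: mult_ac)
  then show ?case using Cons by (simp add: mult_ac)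
qed

lemma prod_fact_pos: "prod_list (map fact xs) > (0::nat)"
  by (induction xs) auto

lemma multinomial_mn: "multinomial (sum_list xs) xs = mn xs"
  unfolding multinomial_def using mn_fact[of xs] prod_fact_pos[of xs] by simp

lemma mn_snoc: "mn (xs @ [x]) = (sum_list xs + x choose x) * mn xs"
proof -
  have A: "fact (sum_list xs + x) = mn (xs @ [x]) * (prod_list (map fact xs) * fact x)"
    using mn_fact[of "xs @ [x]"] by (simp add: mult_ac)
  have B: "fact (sum_list xs + x) = (sum_list xs + x choose x) * mn xs * (prod_list (map fact xs) * fact x)"
    using binomial_fact_lemma[of x "sum_list xs + x"] mn_fact[of xs] by (simp add: mult_ac)
  have E: "mn (xs @ [x]) * (prod_list (map fact xs) * fact x) = (sum_list xs + x choose x) * mn xs * (prod_list (map fact xs) * fact x)"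
    by (rule trans[OF A[symmetric] B])
  have "prod_list (map fact xs) * fact x \<noteq> (0::nat)" using prod_fact_pos[of xs] by simp
  then show ?thesis using E mult_right_cancel by blast
qed

lemma dig_sub:
  assumes "1 < p" "m < p ^ Suc K" "x \<le> m" "\<forall>j\<le>K. dig p x j \<le> dig p m j" "j \<le> K"
  shows "dig p (m - x) j = dig p m j - dig p x j"
proof -
  have xK: "x < p ^ Suc K" using assms by linarith
  have "m - x = (\<Sum>j\<le>K. dig p m j * p ^ j) - (\<Sum>j\<le>K. dig p x j * p ^ j)"
    using dig_expansion[OF assms(1) assms(2)] dig_expansion[OF assms(1) xK] by simp
  also have "\<dots> = (\<Sum>j\<le>K. (dig p m j - dig p x j) * p ^ j)"
    using assms(4) by (subst sum_subtractf_nat[symmetric]) (auto simp: diff_mult_distrib)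
  finally have e: "m - x = (\<Sum>j\<le>K. (dig p m j - dig p x j) * p ^ j)" .
  have "\<forall>j\<le>K. dig p m j - dig p x j < p" using dig_less[of p m] assms(1)
    by (meson diff_le_self le_less_trans zero_less_one less_trans)
  then show ?thesis unfolding e by (rule dig_unique[OF assms(1) _ assms(5)])
qed

lemma mn_lucas:
  assumes "prime p" "sum_list xs < p ^ Suc K"
  shows "[int (mn xs) = (if (\<forall>j\<le>K. (\<Sum>x\<leftarrow>xs. dig p x j) = dig p (sum_list xs) j)
            then (\<Prod>j\<le>K. int (mn (map (\<lambda>x. dig p x j) xs))) else 0)] (mod int p)"
  using assms(2)
proof (induction xs)
  case Nil
  then show ?case by (simp add: dig_def)
next
  case (Cons x xs)
  have p1: "1 < p" using assms prime_gt_1_nat by blast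
  define m where "m = x + sum_list xs"
  have mK: "m < p ^ Suc K" using Cons.prems by (simp add: m_def)
  have xK: "x < p ^ Suc K" "sum_list xs < p ^ Suc K" using mK m_def by auto
  have IH: "[int (mn xs) = (if (\<forall>j\<le>K. (\<Sum>x\<leftarrow>xs. dig p x j) = dig p (sum_list xs) j)
            then (\<Prod>j\<le>K. int (mn (map (\<lambda>x. dig p x j) xs))) else 0)] (mod int p)"
    using Cons.IH xK by blast
  have L: "[int (m choose x) = (\<Prod>j\<le>K. int (dig p m j choose dig p x j))] (mod int p)"
    by (rule lucas[OF assms(1) mK xK(1)])
  have mn_eq: "int (mn (x # xs)) = int (m choose x) * int (mn xs)"
    by (simp add: m_def)
  show ?case
  proof (cases "\<forall>j\<le>K. dig p x j \<le> dig p m j")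
    case False
    then obtain j where j: "j \<le> K" "dig p x j > dig p m j" by auto
    have P0: "(\<Prod>j\<le>K. int (dig p m j choose dig p x j)) = 0"
      using j by (intro prod_zero) (auto intro!: bexI[of _ j] simp: binomial_eq_0)
    have "[int (m choose x) = 0] (mod int p)" using L[unfolded P0] .
    then have "[int (mn (x # xs)) = 0] (mod int p)" unfolding mn_eq
      using cong_mult[of "int (m choose x)" 0 "int p" "int (mn xs)" "int (mn xs)"] by simp
    moreover have ndc: "\<not> (\<forall>j\<le>K. (\<Sum>y\<leftarrow>x # xs. dig p y j) = dig p (sum_list (x # xs)) j)"
      using j by (auto simp: m_def intro!: exI[of _ j])
    ultimately show ?thesis by (simp only: ndc if_False)
  next
    case True
    have ds: "dig p (sum_list xs) j = dig p m j - dig p x j" if "j \<le> K" for j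
      using dig_sub[OF p1 mK _ True that] by (simp add: m_def)
    have iff: "(\<forall>j\<le>K. (\<Sum>y\<leftarrow>x # xs. dig p y j) = dig p (sum_list (x # xs)) j)
        \<longleftrightarrow> (\<forall>j\<le>K. (\<Sum>y\<leftarrow>xs. dig p y j) = dig p (sum_list xs) j)"
      using ds True by (auto simp: m_def[symmetric])
    show ?thesis
    proof (cases "\<forall>j\<le>K. (\<Sum>y\<leftarrow>xs. dig p y j) = dig p (sum_list xs) j")
      case False
      then have "[int (mn xs) = 0] (mod int p)" using IH by (simp only: False if_False)
      then have "[int (mn (x # xs)) = 0] (mod int p)" unfolding mn_eq
        using cong_mult[of "int (m choose x)" "int (m choose x)" "int p" "int (mn xs)" 0] by simp
      then show ?thesis using iff False by (simp only: if_False)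
    next
      case dc: True
      have "[int (mn (x # xs)) = (\<Prod>j\<le>K. int (dig p m j choose dig p x j)) * (\<Prod>j\<le>K. int (mn (map (\<lambda>x. dig p x j) xs)))] (mod int p)"
        unfolding mn_eq using L IH dc by (intro cong_mult) auto
      also have "(\<Prod>j\<le>K. int (dig p m j choose dig p x j)) * (\<Prod>j\<le>K. int (mn (map (\<lambda>x. dig p x j) xs)))
          = (\<Prod>j\<le>K. int (mn (map (\<lambda>y. dig p y j) (x # xs))))"
      proof -
        have "int (dig p m j choose dig p x j) * int (mn (map (\<lambda>x. dig p x j) xs)) = int (mn (map (\<lambda>y. dig p y j) (x # xs)))"
          if "j \<le> K" for j
        proof -
          have "dig p x j + sum_list (map (\<lambda>x. dig p x j) xs) = dig p m j"
            using dc ds[OF that] True that by (simp add: sum_list_map_eq_sum_count)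
          then show ?thesis by simp
        qed
        then have "(\<Prod>j\<le>K. int (dig p m j choose dig p x j) * int (mn (map (\<lambda>x. dig p x j) xs)))
            = (\<Prod>j\<le>K. int (mn (map (\<lambda>y. dig p y j) (x # xs))))"
          by (intro prod.cong refl) blast
        then show ?thesis by (simp only: prod.distrib[symmetric])
      qed
      finally show ?thesis using iff dc by simp
    qed
  qed
qed

lemma pow2_fermat:
  assumes "prime p" "odd p"
  shows "[(2::nat) ^ (p ^ j) = 2] (mod p)"
proof (induction j)
  case 0
  then show ?case by simp
next
  case (Suc j)
  have p1: "1 < p" using assms prime_gt_1_nat by blast
  have nd: "\<not> p dvd 2"
  proof
    assume "p dvd 2"
    then have "p \<le> 2" by (simp add: dvd_imp_le)
    then have "p = 2" using p1 by simp
    then show False using assms(2) by simp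
  qed
  have f: "[(2::nat) ^ p = 2] (mod p)"
  proof -
    have "[(2::nat) ^ (p - 1) * 2 = 1 * 2] (mod p)"
      using fermat_theorem[OF assms(1) nd] by (intro cong_mult cong_refl)
    moreover have "(2::nat) ^ (p - 1) * 2 = 2 ^ p" using p1
      by (metis Suc_diff_1 less_trans power_Suc2 zero_less_one)
    ultimately show ?thesis by simp
  qed
  have "(2::nat) ^ (p ^ Suc j) = (2 ^ (p ^ j)) ^ p"
    by (simp add: power_mult[symmetric] mult.commute)
  also have "[\<dots> = 2 ^ p] (mod p)" by (intro cong_pow Suc.IH)
  also have "[(2::nat) ^ p = 2] (mod p)" by (rule f)
  finally show ?case .
qed

lemma pow2_digits:
  assumes "prime p" "odd p"
  shows "[(2::nat) ^ (\<Sum>j\<le>K. e j * p ^ j) = (\<Prod>j\<le>K. 2 ^ e j)] (mod p)"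
proof -
  have "(2::nat) ^ (\<Sum>j\<le>K. e j * p ^ j) = (\<Prod>j\<le>K. (2 ^ (p ^ j)) ^ e j)"
    by (simp add: power_sum power_mult[symmetric] mult.commute)
  also have "[\<dots> = (\<Prod>j\<le>K. 2 ^ e j)] (mod p)"
    by (intro cong_prod cong_pow pow2_fermat assms)
  finally show ?thesis .
qed


definition ptl :: "nat list \<Rightarrow> bool" where
  "ptl xs \<longleftrightarrow> xs \<noteq> [] \<and> (\<forall>x\<in>set (tl xs). 0 < x)"

lemma pseudo_comp_ptl: "pseudo_comp n xs \<longleftrightarrow> ptl xs \<and> sum_list xs = n"
  by (auto simp: pseudo_comp_def ptl_def)

lemma comp_des_single[simp]: "comp_des [x] = {}"
  by (auto simp: comp_des_def)

lemma comp_des_snoc: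
  assumes "xs \<noteq> []"
  shows "comp_des (xs @ [x]) = insert (sum_list xs) (comp_des xs)"
proof -
  have L: "length xs \<ge> 1" using assms by (cases xs) auto
  show ?thesis
  proof (rule Set.set_eqI, rule iffI)
    fix d assume "d \<in> comp_des (xs @ [x])"
    then obtain j where j: "1 \<le> j" "j < length xs + 1" "d = sum_list (take j (xs @ [x]))"
      by (auto simp: comp_des_def)
    show "d \<in> insert (sum_list xs) (comp_des xs)"
    proof (cases "j = length xs")
      case True then show ?thesis using j by simp
    next
      case False
      then have "j < length xs" using j by simp
      then show ?thesis using j by (auto simp: comp_des_def)
    qed
  next
    fix d assume "d \<in> insert (sum_list xs) (comp_des xs)"
    then show "d \<in> comp_des (xs @ [x])"
    proof
      assume "d = sum_list xs"
      then show ?thesis using L unfolding comp_des_def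
        by (intro CollectI exI[of _ "length xs"]) auto
    next
      assume "d \<in> comp_des xs"
      then obtain j where j: "1 \<le> j" "j < length xs" "d = sum_list (take j xs)"
        by (auto simp: comp_des_def)
      then show ?thesis unfolding comp_des_def
        by (intro CollectI exI[of _ j]) auto
    qed
  qed
qed

lemma ptl_snoc: "xs \<noteq> [] \<Longrightarrow> ptl (xs @ [x]) \<longleftrightarrow> ptl xs \<and> 0 < x"
  by (cases xs) (auto simp: ptl_def)

lemma comp_des_less:
  assumes "ptl xs" "d \<in> comp_des xs"
  shows "d < sum_list xs"
proof -
  obtain j where j: "1 \<le> j" "j < length xs" "d = sum_list (take j xs)"
    using assms(2) by (auto simp: comp_des_def)
  have ne: "drop j xs \<noteq> []" using j by simp
  have sub: "set (drop j xs) \<subseteq> set (tl xs)"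
  proof -
    have "drop j xs = drop (j - 1) (tl xs)" using j by (cases xs; cases j) auto
    then show ?thesis by (metis set_drop_subset)
  qed
  have "hd (drop j xs) \<in> set (drop j xs)" using ne by simp
  then have "0 < hd (drop j xs)" using sub assms(1) by (auto simp: ptl_def)
  moreover have "hd (drop j xs) \<le> sum_list (drop j xs)"
    using \<open>hd (drop j xs) \<in> set (drop j xs)\<close> by (intro member_le_sum_list) auto
  moreover have "sum_list xs = sum_list (take j xs) + sum_list (drop j xs)"
    by (metis append_take_drop_id sum_list_append)
  ultimately show ?thesis using j by linarith
qed

lemma finite_comp_des[simp]: "finite (comp_des xs)"
proof -
  have "comp_des xs = (\<lambda>j. sum_list (take j xs)) ` {j. 1 \<le> j \<and> j < length xs}"
    by (auto simp: comp_des_def)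
  then show ?thesis by simp
qed

lemma card_comp_des: "ptl xs \<Longrightarrow> card (comp_des xs) = length xs - 1"
proof (induction xs rule: rev_induct)
  case Nil
  then show ?case by (simp add: ptl_def)
next
  case (snoc x xs)
  show ?case
  proof (cases "xs = []")
    case True
    then show ?thesis by simp
  next
    case False
    have p: "ptl xs" using snoc.prems ptl_snoc[OF False] by simp
    have "sum_list xs \<notin> comp_des xs" using comp_des_less[OF p] by blast
    then show ?thesis using comp_des_snoc[OF False] snoc.IH[OF p] False
      by (cases xs) auto
  qed
qed

lemma comp_des_sub: "pseudo_comp n a \<Longrightarrow> comp_des a \<subseteq> {..<n}"
  using comp_des_less by (auto simp: pseudo_comp_ptl)

lemma ptl_cases:
  assumes "ptl a"
  obtains x where "a = [x]"
  | ys y where "a = ys @ [y]" "ys \<noteq> []" "ptl ys" "0 < y"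
proof -
  have "a \<noteq> []" using assms by (simp add: ptl_def)
  then obtain ys y where a: "a = ys @ [y]" by (metis rev_exhaust)
  show ?thesis
  proof (cases "ys = []")
    case True then show ?thesis using a that by simp
  next
    case False then show ?thesis using a that assms ptl_snoc by blast
  qed
qed

lemma comp_des_inj:
  "pseudo_comp n a \<Longrightarrow> pseudo_comp n b \<Longrightarrow> comp_des a = comp_des b \<Longrightarrow> a = b"
proof (induction "length a" arbitrary: n a b rule: less_induct)
  case less
  have pa: "ptl a" and pb: "ptl b" and sa: "sum_list a = n" and sb: "sum_list b = n"
    using less.prems by (auto simp: pseudo_comp_ptl)
  show ?case
  proof (cases rule: ptl_cases[OF pa])
    case (1 x)
    then have "comp_des b = {}" using less.prems by simp
    then show ?thesis
    proof (cases rule: ptl_cases[OF pb])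
      case (1 y) then show ?thesis using \<open>a = [x]\<close> sa sb by simp
    next
      case (2 zs z)
      then show ?thesis using \<open>comp_des b = {}\<close> comp_des_snoc by auto
    qed
  next
    case (2 ys y)
    note a = 2
    show ?thesis
    proof (cases rule: ptl_cases[OF pb])
      case (1 z)
      then show ?thesis using a less.prems comp_des_snoc by auto
    next
      case (2 zs z)
      note b = 2
      have Da: "comp_des a = insert (sum_list ys) (comp_des ys)" using a comp_des_snoc by simp
      have Db: "comp_des b = insert (sum_list zs) (comp_des zs)" using b comp_des_snoc by simp
      have ma: "Max (comp_des a) = sum_list ys"
        using Da comp_des_less[OF a(3)] by (intro Max_eqI) (auto intro: less_imp_le)
      have mb: "Max (comp_des b) = sum_list zs"
        using Db comp_des_less[OF b(3)] by (intro Max_eqI) (auto intro: less_imp_le)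
      have s: "sum_list ys = sum_list zs" using ma mb less.prems by simp
      have "comp_des ys = comp_des a - {sum_list ys}"
        using Da comp_des_less[OF a(3)] by auto
      moreover have "comp_des zs = comp_des b - {sum_list zs}"
        using Db comp_des_less[OF b(3)] by auto
      ultimately have "comp_des ys = comp_des zs" using s less.prems by simp
      moreover have "pseudo_comp (sum_list ys) ys" "pseudo_comp (sum_list ys) zs"
        using a b s by (auto simp: pseudo_comp_ptl)
      moreover have "length ys < length a" using a by simp
      ultimately have "ys = zs" using less.hyps by blast
      moreover have "y = z" using sa sb a b s by simp
      ultimately show ?thesis using a b by simp
    qed
  qed
qed

lemma comp_des_surj:
  "S \<subseteq> {..<n} \<Longrightarrow> \<exists>a. pseudo_comp n a \<and> comp_des a = S"
proof (induction n arbitrary: S rule: less_induct)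
  case (less n)
  show ?case
  proof (cases "S = {}")
    case True
    then show ?thesis by (intro exI[of _ "[n]"]) (auto simp: pseudo_comp_def)
  next
    case False
    have fin: "finite S" using less.prems finite_subset by blast
    define m where "m = Max S"
    have mS: "m \<in> S" using fin False by (simp add: m_def)
    have mn: "m < n" using mS less.prems by auto
    have S': "S - {m} \<subseteq> {..<m}"
      using fin m_def by (auto simp: less_le)
    obtain a' where a': "pseudo_comp m a'" "comp_des a' = S - {m}"
      using less.IH[OF mn S'] by blast
    have ne: "a' \<noteq> []" using a' by (simp add: pseudo_comp_def)
    have "pseudo_comp n (a' @ [n - m])"
      using a' ne mn ptl_snoc[OF ne] by (auto simp: pseudo_comp_ptl)
    moreover have "comp_des (a' @ [n - m]) = S"
      using comp_des_snoc[OF ne] a' mS by (auto simp: pseudo_comp_def)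
    ultimately show ?thesis by blast
  qed
qed

lemma bij_comp_des: "bij_betw comp_des {a. pseudo_comp n a} (Pow {..<n})"
  unfolding bij_betw_def
proof
  show "inj_on comp_des {a. pseudo_comp n a}"
    by (auto intro: inj_onI comp_des_inj)
  show "comp_des ` {a. pseudo_comp n a} = Pow {..<n}"
    using comp_des_sub comp_des_surj by blast
qed

lemma finite_pc: "finite {a. pseudo_comp n a}"
  using bij_betw_finite[OF bij_comp_des[of n]] by simp


definition slists :: "int set \<Rightarrow> int list set" where
  "slists A = {xs. length xs = card A \<and> distinct (map abs xs) \<and> abs ` set xs = A}"

definition okd :: "nat set \<Rightarrow> int list \<Rightarrow> bool" where
  "okd S xs \<longleftrightarrow> (\<forall>i<length xs. i \<notin> S \<longrightarrow> (0 # xs) ! i \<le> xs ! i)"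

definition Zs :: "int set \<Rightarrow> nat \<Rightarrow> int set set" where
  "Zs A x = {Z. finite Z \<and> card Z = x \<and> inj_on abs Z \<and> abs ` Z \<subseteq> A}"

lemma abs_sub_pm: "abs ` Z \<subseteq> A \<Longrightarrow> Z \<subseteq> A \<union> uminus ` (A::int set)"
proof
  fix z assume "abs ` Z \<subseteq> A" "z \<in> Z"
  then have "\<bar>z\<bar> \<in> A" by auto
  then show "z \<in> A \<union> uminus ` A"
    by (cases "z \<ge> 0") (auto simp: image_iff intro: bexI[of _ "\<bar>z\<bar>"])
qed

lemma finite_slists: "finite A \<Longrightarrow> finite (slists A)"
proof -
  assume fA: "finite A"
  have "slists A \<subseteq> {xs. set xs \<subseteq> A \<union> uminus ` A \<and> length xs = card A}"
    unfolding slists_def using abs_sub_pm by blast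
  moreover have "finite {xs. set xs \<subseteq> A \<union> uminus ` A \<and> length xs = card A}"
    using fA by (intro finite_lists_length_eq) auto
  ultimately show ?thesis by (rule finite_subset)
qed

lemma finite_Zs: "finite A \<Longrightarrow> finite (Zs A x)"
proof -
  assume fA: "finite A"
  have "Zs A x \<subseteq> Pow (A \<union> uminus ` A)"
    unfolding Zs_def using abs_sub_pm by blast
  then show ?thesis using fA by (meson finite_Pow_iff finite_Un finite_imageI finite_subset)
qed

lemma card_signings:
  fixes B :: "int set"
  assumes "finite B" "B \<subseteq> {0<..}"
  shows "card {Z. abs ` Z = B \<and> inj_on abs Z} = 2 ^ card B"
proof -
  have "bij_betw (\<lambda>Z. Z \<inter> B) {Z. abs ` Z = B \<and> inj_on abs Z} (Pow B)"
  proof (rule bij_betw_byWitness[where f' = "\<lambda>U. U \<union> uminus ` (B - U)"])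
    show "\<forall>Z\<in>{Z. abs ` Z = B \<and> inj_on abs Z}. Z \<inter> B \<union> uminus ` (B - Z \<inter> B) = Z"
    proof
      fix Z assume Z: "Z \<in> {Z. abs ` Z = B \<and> inj_on abs Z}"
      then have ZB: "abs ` Z = B" and inj: "inj_on abs Z" by auto
      show "Z \<inter> B \<union> uminus ` (B - Z \<inter> B) = Z"
      proof (rule Set.set_eqI, rule iffI)
        fix z assume z: "z \<in> Z \<inter> B \<union> uminus ` (B - Z \<inter> B)"
        show "z \<in> Z"
        proof (cases "z \<in> Z \<inter> B")
          case True then show ?thesis by simp
        next
          case False
          then obtain b where b: "b \<in> B" "b \<notin> Z" "z = - b" using z by auto
          then obtain w where w: "w \<in> Z" "abs w = b" using ZB by auto
          have "b > 0" using b assms(2) by auto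
          then have "w = - b" using w b by (cases "w \<ge> 0") auto
          then show ?thesis using w b by simp
        qed
      next
        fix z assume z: "z \<in> Z"
        have zB: "abs z \<in> B" using ZB z by auto
        show "z \<in> Z \<inter> B \<union> uminus ` (B - Z \<inter> B)"
        proof (cases "z \<ge> 0")
          case True then show ?thesis using z zB by simp
        next
          case False
          have "- z \<notin> Z"
          proof
            assume "- z \<in> Z"
            then have "- z = z" using inj z using inj_onD[OF inj, of "- z" z] by simp
            then show False using False by simp
          qed
          then show ?thesis using False zB by (auto simp: image_iff intro!: bexI[of _ "- z"])
        qed
      qed
    qed
    show "\<forall>U\<in>Pow B. (U \<union> uminus ` (B - U)) \<inter> B = U"
    proof
      fix U assume U: "U \<in> Pow B"
      have "uminus ` (B - U) \<inter> B = {}"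
      proof (rule ccontr)
        assume "uminus ` (B - U) \<inter> B \<noteq> {}"
        then obtain b where b: "b \<in> B" "- b \<in> B" by auto
        have "b \<in> {0<..}" "- b \<in> {0<..}" using assms(2) b by blast+
        then show False by simp
      qed
      then show "(U \<union> uminus ` (B - U)) \<inter> B = U" using U by blast
    qed
    show "(\<lambda>Z. Z \<inter> B) ` {Z. abs ` Z = B \<and> inj_on abs Z} \<subseteq> Pow B" by auto
    show "(\<lambda>U. U \<union> uminus ` (B - U)) ` Pow B \<subseteq> {Z. abs ` Z = B \<and> inj_on abs Z}"
    proof (clarsimp)
      fix U assume U: "U \<subseteq> B"
      have pos: "\<And>b. b \<in> B \<Longrightarrow> b > 0" using assms(2) by auto
      have "abs ` (U \<union> uminus ` (B - U)) = B"
      proof (intro Set.set_eqI iffI)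
        fix b assume "b \<in> abs ` (U \<union> uminus ` (B - U))"
        then show "b \<in> B" using U pos by (force)
      next
        fix b assume b: "b \<in> B"
        show "b \<in> abs ` (U \<union> uminus ` (B - U))"
        proof (cases "b \<in> U")
          case True then show ?thesis using pos[OF b] by (force intro: image_eqI[of _ _ b])
        next
          case False then show ?thesis using pos[OF b] b by (force intro: image_eqI[of _ _ "- b"])
        qed
      qed
      moreover have "inj_on abs (U \<union> uminus ` (B - U))"
      proof (rule inj_onI)
        fix u v assume u: "u \<in> U \<union> uminus ` (B - U)" and v: "v \<in> U \<union> uminus ` (B - U)" and e: "abs u = abs v"
        show "u = v"
          using u v e U pos by (auto; smt (verit, best) subsetD)
      qed
      ultimately show "abs ` (U \<union> uminus ` (B - U)) = B \<and> inj_on abs (U \<union> uminus ` (B - U))" by simp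
    qed
  qed
  then have "card {Z. abs ` Z = B \<and> inj_on abs Z} = card (Pow B)" by (rule bij_betw_same_card)
  then show ?thesis using assms(1) by (simp add: card_Pow)
qed

lemma card_Zs:
  fixes A :: "int set"
  assumes "finite A" "A \<subseteq> {0<..}"
  shows "card (Zs A x) = (card A choose x) * 2 ^ x"
proof -
  let ?I = "{B. B \<subseteq> A \<and> card B = x}"
  have eq: "Zs A x = (\<Union>B\<in>?I. {Z. abs ` Z = B \<and> inj_on abs Z})"
  proof (rule subset_antisym; rule subsetI)
    fix Z assume "Z \<in> Zs A x"
    then show "Z \<in> (\<Union>B\<in>?I. {Z. abs ` Z = B \<and> inj_on abs Z})"
      by (auto simp: Zs_def card_image)
  next
    fix Z assume "Z \<in> (\<Union>B\<in>?I. {Z. abs ` Z = B \<and> inj_on abs Z})"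
    then obtain B where B: "B \<subseteq> A" "card B = x" "abs ` Z = B" "inj_on abs Z" by auto
    have "finite B" using B assms(1) finite_subset by blast
    then have "finite Z" using B finite_imageD by blast
    then show "Z \<in> Zs A x" using B by (auto simp: Zs_def card_image)
  qed
  have fI: "finite ?I" using assms(1) by simp
  have "card (Zs A x) = (\<Sum>B\<in>?I. card {Z. abs ` Z = B \<and> inj_on abs Z})"
    unfolding eq
  proof (rule card_UN_disjoint[OF fI])
    show "\<forall>B\<in>?I. finite {Z. abs ` Z = B \<and> inj_on abs Z}"
    proof
      fix B assume B: "B \<in> ?I"
      have "{Z. abs ` Z = B \<and> inj_on abs Z} \<subseteq> Pow (B \<union> uminus ` B)"
        using abs_sub_pm by blast
      moreover have "finite B" using B assms(1) finite_subset by blast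
      ultimately show "finite {Z. abs ` Z = B \<and> inj_on abs Z}"
        by (meson finite_Pow_iff finite_Un finite_imageI finite_subset)
    qed
    show "\<forall>B\<in>?I. \<forall>C\<in>?I. B \<noteq> C \<longrightarrow> {Z. abs ` Z = B \<and> inj_on abs Z} \<inter> {Z. abs ` Z = C \<and> inj_on abs Z} = {}"
      by auto
  qed
  also have "\<dots> = (\<Sum>B\<in>?I. 2 ^ x)"
  proof (rule sum.cong[OF refl])
    fix B assume B: "B \<in> ?I"
    then have "finite B" "B \<subseteq> {0<..}" using assms finite_subset by auto
    then show "card {Z. abs ` Z = B \<and> inj_on abs Z} = 2 ^ x" using card_signings B by simp
  qed
  also have "\<dots> = (card A choose x) * 2 ^ x"
    using n_subsets[OF assms(1), of x] by simp
  finally show ?thesis .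
qed

lemma okd_split:
  assumes "length ws = s" "S' \<subseteq> {..<s}"
  shows "okd (insert s S') (ws @ zs) \<longleftrightarrow> okd S' ws \<and> sorted zs"
proof -
  have A1: "(0 # ws @ zs) ! i = (0 # ws) ! i" if "i < s" for i
  proof -
    have "0 # ws @ zs = (0 # ws) @ zs" by simp
    moreover have "i < length (0 # ws)" using that assms(1) by simp
    ultimately show ?thesis by (simp only: nth_append if_True)
  qed
  have A2: "(ws @ zs) ! i = ws ! i" if "i < s" for i
    using that assms(1) by (simp add: nth_append)
  have B1: "(0 # ws @ zs) ! (Suc s + t) = zs ! t" for t
  proof -
    have "(0 # ws @ zs) ! (Suc s + t) = (ws @ zs) ! (length ws + t)" using assms(1) by simp
    also have "\<dots> = zs ! t" by (rule nth_append_length_plus)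
    finally show ?thesis .
  qed
  have B2: "(ws @ zs) ! (Suc s + t) = zs ! Suc t" for t
  proof -
    have "(ws @ zs) ! (Suc s + t) = (ws @ zs) ! (length ws + Suc t)" using assms(1) by simp
    also have "\<dots> = zs ! Suc t" by (rule nth_append_length_plus)
    finally show ?thesis .
  qed
  show ?thesis
  proof
    assume h: "okd (insert s S') (ws @ zs)"
    have h': "(0 # ws @ zs) ! i \<le> (ws @ zs) ! i" if "i < length (ws @ zs)" "i \<notin> insert s S'" for i
      using h that unfolding okd_def by blast
    have "okd S' ws" unfolding okd_def
    proof (intro allI impI)
      fix i assume i: "i < length ws" "i \<notin> S'"
      have "i < length (ws @ zs)" "i \<notin> insert s S'" using i assms(1) by auto
      then have "(0 # ws @ zs) ! i \<le> (ws @ zs) ! i" by (rule h')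
      then show "(0 # ws) ! i \<le> ws ! i" using A1[of i] A2[of i] i assms(1) by simp
    qed
    moreover have "sorted zs" unfolding sorted_iff_nth_Suc
    proof (intro allI impI)
      fix t assume t: "Suc t < length zs"
      have "Suc s + t < length (ws @ zs)" "Suc s + t \<notin> insert s S'" using t assms by auto
      then have "(0 # ws @ zs) ! (Suc s + t) \<le> (ws @ zs) ! (Suc s + t)" by (rule h')
      then show "zs ! t \<le> zs ! Suc t" by (simp only: B1 B2)
    qed
    ultimately show "okd S' ws \<and> sorted zs" ..
  next
    assume h: "okd S' ws \<and> sorted zs"
    show "okd (insert s S') (ws @ zs)" unfolding okd_def
    proof (intro allI impI)
      fix i assume i: "i < length (ws @ zs)" "i \<notin> insert s S'"
      show "(0 # ws @ zs) ! i \<le> (ws @ zs) ! i"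
      proof (cases "i < s")
        case True
        have "(0 # ws) ! i \<le> ws ! i" using h i True assms(1) unfolding okd_def by auto
        then show ?thesis using A1[OF True] A2[OF True] by simp
      next
        case False
        then have "s < i" using i by auto
        define t where "t = i - Suc s"
        have t: "i = Suc s + t" using \<open>s < i\<close> by (simp add: t_def)
        have "Suc t < length zs" using i(1) \<open>s < i\<close> assms(1) by (simp add: t_def)
        then have "zs ! t \<le> zs ! Suc t" using h unfolding sorted_iff_nth_Suc by blast
        then show ?thesis using t by (simp only: B1 B2)
      qed
    qed
  qed
qed


lemma sorted_list_of_set_id: "sorted zs \<Longrightarrow> distinct zs \<Longrightarrow> sorted_list_of_set (set zs) = zs"
  by (simp add: sorted_list_of_set_sort_remdups distinct_remdups_id sorted_sort_id)

lemma slists_base: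
  fixes A :: "int set"
  assumes "finite A" "A \<subseteq> {0<..}"
  shows "{xs \<in> slists A. okd {} xs} = {sorted_list_of_set A}"
proof (rule Set.set_eqI, rule iffI)
  fix xs assume "xs \<in> {xs \<in> slists A. okd {} xs}"
  then have xs: "length xs = card A" "distinct (map abs xs)" "abs ` set xs = A" "okd {} xs"
    by (auto simp: slists_def)
  have srt: "sorted xs" unfolding sorted_iff_nth_Suc
  proof (intro allI impI)
    fix i assume "Suc i < length xs"
    then have "(0 # xs) ! Suc i \<le> xs ! Suc i" using xs(4) unfolding okd_def by blast
    then show "xs ! i \<le> xs ! Suc i" by simp
  qed
  have nn: "0 \<le> x" if "x \<in> set xs" for x
  proof -
    obtain j where j: "j < length xs" "x = xs ! j" using \<open>x \<in> set xs\<close> by (metis in_set_conv_nth)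
    have "0 < length xs" using j(1) by linarith
    then have "(0 # xs) ! 0 \<le> xs ! 0" using xs(4) unfolding okd_def by blast
    moreover have "xs ! 0 \<le> xs ! j" using srt j by (intro sorted_nth_mono) auto
    ultimately show ?thesis using j by simp
  qed
  have "abs ` set xs = set xs" using nn by (force simp: image_iff)
  then have sA: "set xs = A" using xs(3) by simp
  have "distinct xs" using xs(2) by (simp add: distinct_map)
  then have "sorted_list_of_set A = xs" using sA srt sorted_list_of_set_id by blast
  then show "xs \<in> {sorted_list_of_set A}" by simp
next
  fix xs assume "xs \<in> {sorted_list_of_set A}"
  then have xs: "xs = sorted_list_of_set A" by simp
  have sA: "set xs = A" and dx: "distinct xs" and srt: "sorted xs" and lx: "length xs = card A"
    using assms(1) xs by auto
  have pos: "0 < x" if "x \<in> set xs" for x using that sA assms(2) by auto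
  have ma: "map abs xs = xs" by (intro map_idI) (simp add: abs_of_pos pos)
  have "okd {} xs" unfolding okd_def
  proof (intro allI impI)
    fix i assume i: "i < length xs"
    show "(0 # xs) ! i \<le> xs ! i"
    proof (cases i)
      case 0
      then show ?thesis using pos[of "xs ! 0"] i by auto
    next
      case (Suc j)
      then show ?thesis using srt i by (simp add: sorted_iff_nth_Suc)
    qed
  qed
  moreover have "abs ` set xs = set xs" using ma by (metis list.set_map)
  ultimately show "xs \<in> {xs \<in> slists A. okd {} xs}"
    using ma dx sA lx by (simp add: slists_def)
qed

lemma count_lists:
  fixes A :: "int set"
  assumes "finite A" "A \<subseteq> {0<..}" "ptl \<beta>" "sum_list \<beta> = card A"
  shows "card {xs \<in> slists A. okd (comp_des \<beta>) xs} = 2 ^ (card A - hd \<beta>) * mn \<beta>"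
  using assms
proof (induction \<beta> arbitrary: A rule: rev_induct)
  case Nil
  then show ?case by (simp add: ptl_def)
next
  case (snoc y ys)
  show ?case
  proof (cases "ys = []")
    case True
    then show ?thesis using snoc.prems slists_base[of A] by simp
  next
    case False
    have pys: "ptl ys" and ypos: "0 < y" using snoc.prems(3) ptl_snoc[OF False] by auto
    define s where "s = sum_list ys"
    define n where "n = card A"
    have ns: "n = s + y" using snoc.prems(4) by (simp add: s_def n_def)
    define S' where "S' = comp_des ys"
    have S'sub: "S' \<subseteq> {..<s}" using comp_des_less[OF pys] by (auto simp: S'_def s_def)
    have Seq: "comp_des (ys @ [y]) = insert s S'" using comp_des_snoc[OF False] by (simp add: S'_def s_def)
    have fA: "finite A" and pA: "A \<subseteq> {0<..}" using snoc.prems by auto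
    have Zfacts: "card (abs ` Z) = y" "abs ` Z \<subseteq> A" "card (A - abs ` Z) = s" "finite Z" "inj_on abs Z"
      "card Z = y" if "Z \<in> Zs A y" for Z
    proof -
      show "card (abs ` Z) = y" "abs ` Z \<subseteq> A" "finite Z" "inj_on abs Z" "card Z = y"
        using that by (auto simp: Zs_def card_image)
      then show "card (A - abs ` Z) = s"
        using fA ns by (simp add: card_Diff_subset finite_subset n_def)
    qed
    let ?L = "{xs \<in> slists A. okd (insert s S') xs}"
    let ?R = "Sigma (Zs A y) (\<lambda>Z. {ws \<in> slists (A - abs ` Z). okd S' ws})"
    define F where "F = (\<lambda>xs::int list. (set (drop s xs), take s xs))"
    define G where "G = (\<lambda>(Z::int set, ws::int list). ws @ sorted_list_of_set Z)"
    have Lfacts: "length (take s xs) = s" "xs = take s xs @ drop s xs" "okd S' (take s xs)"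
        "sorted (drop s xs)" "distinct (drop s xs)" "length (drop s xs) = y"
        "distinct (map abs (take s xs))" "distinct (map abs (drop s xs))"
        "abs ` set (take s xs) \<inter> abs ` set (drop s xs) = {}"
        "abs ` set (take s xs) \<union> abs ` set (drop s xs) = A"
      if "xs \<in> ?L" for xs
    proof -
      have xs: "length xs = n" "distinct (map abs xs)" "abs ` set xs = A" "okd (insert s S') xs"
        using that by (auto simp: slists_def n_def)
      show lt: "length (take s xs) = s" using xs(1) ns by simp
      show ap: "xs = take s xs @ drop s xs" by simp
      show "okd S' (take s xs)" "sorted (drop s xs)"
        using okd_split[OF lt S'sub, of "drop s xs"] xs(4) by simp_all
      have dm: "distinct (map abs (take s xs) @ map abs (drop s xs))"
        using xs(2) ap by (metis map_append)
      then show "distinct (map abs (take s xs))" "distinct (map abs (drop s xs))"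
        "abs ` set (take s xs) \<inter> abs ` set (drop s xs) = {}" by auto
      then show "distinct (drop s xs)" by (simp add: distinct_map)
      show "length (drop s xs) = y" using xs(1) ns by simp
      show "abs ` set (take s xs) \<union> abs ` set (drop s xs) = A"
        using xs(3) ap by (metis image_Un set_append)
    qed
    have bij: "bij_betw F ?L ?R"
    proof (rule bij_betw_byWitness[where f' = G])
      show "\<forall>xs\<in>?L. G (F xs) = xs"
      proof
        fix xs assume h: "xs \<in> ?L"
        have "sorted_list_of_set (set (drop s xs)) = drop s xs"
          using Lfacts[OF h] by (intro sorted_list_of_set_id) auto
        then show "G (F xs) = xs" by (simp add: F_def G_def)
      qed
      show "\<forall>zw\<in>?R. F (G zw) = zw"
      proof
        fix zw assume h: "zw \<in> ?R"
        then obtain Z ws where zw: "zw = (Z, ws)" "Z \<in> Zs A y" "ws \<in> slists (A - abs ` Z)" by auto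
        have lw: "length ws = s" using zw Zfacts[OF zw(2)] by (simp add: slists_def)
        have "set (sorted_list_of_set Z) = Z" using Zfacts[OF zw(2)] by simp
        then show "F (G zw) = zw" using lw zw by (simp add: F_def G_def)
      qed
      show "F ` ?L \<subseteq> ?R"
      proof
        fix zw assume "zw \<in> F ` ?L"
        then obtain xs where h: "xs \<in> ?L" and zw: "zw = F xs" by auto
        note lf = Lfacts[OF h]
        have "set (drop s xs) \<in> Zs A y"
          unfolding Zs_def using lf
          by (auto simp: distinct_card distinct_map)
        moreover have "take s xs \<in> slists (A - abs ` set (drop s xs))"
        proof -
          have "abs ` set (take s xs) = A - abs ` set (drop s xs)" using lf(9,10) by blast
          moreover have "card (A - abs ` set (drop s xs)) = s"
            using Zfacts(3)[OF \<open>set (drop s xs) \<in> Zs A y\<close>] .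
          ultimately show ?thesis using lf by (simp add: slists_def)
        qed
        ultimately show "zw \<in> ?R" using zw lf by (simp add: F_def)
      qed
      show "G ` ?R \<subseteq> ?L"
      proof
        fix xs assume "xs \<in> G ` ?R"
        then obtain Z ws where zw: "Z \<in> Zs A y" "ws \<in> slists (A - abs ` Z)" "okd S' ws"
          and xs: "xs = ws @ sorted_list_of_set Z" by (auto simp: G_def)
        note zf = Zfacts[OF zw(1)]
        let ?zs = "sorted_list_of_set Z"
        have w: "length ws = s" "distinct (map abs ws)" "abs ` set ws = A - abs ` Z"
          using zw(2) zf by (auto simp: slists_def)
        have z: "set ?zs = Z" "distinct ?zs" "sorted ?zs" "length ?zs = y" using zf by auto
        have "length xs = n" using xs w z ns by simp
        moreover have "distinct (map abs xs)"
          using xs w z zf by (auto simp: distinct_map)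
        moreover have "abs ` set xs = A" using xs w z zf by auto
        moreover have "okd (insert s S') xs"
          using xs okd_split[OF w(1) S'sub] zw(3) z by simp
        ultimately show "xs \<in> ?L" by (simp add: slists_def n_def)
      qed
    qed
    have "card ?L = card ?R" using bij by (rule bij_betw_same_card)
    also have "\<dots> = (\<Sum>Z\<in>Zs A y. card {ws \<in> slists (A - abs ` Z). okd S' ws})"
      using finite_Zs[OF fA] fA by (intro card_SigmaI) (auto intro: finite_subset[OF _ finite_slists])
    also have "\<dots> = (\<Sum>Z\<in>Zs A y. 2 ^ (s - hd ys) * mn ys)"
    proof (rule sum.cong[OF refl])
      fix Z assume Z: "Z \<in> Zs A y"
      have "finite (A - abs ` Z)" "A - abs ` Z \<subseteq> {0<..}" "sum_list ys = card (A - abs ` Z)"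
        using fA pA Zfacts(3)[OF Z] by (auto simp: s_def)
      then show "card {ws \<in> slists (A - abs ` Z). okd S' ws} = 2 ^ (s - hd ys) * mn ys"
        using snoc.IH[OF _ _ pys] by (simp add: S'_def s_def)
    qed
    also have "\<dots> = (n choose y) * 2 ^ y * (2 ^ (s - hd ys) * mn ys)"
      using card_Zs[OF fA pA, of y] by (simp add: n_def)
    also have "\<dots> = 2 ^ (n - hd (ys @ [y])) * mn (ys @ [y])"
    proof -
      have "hd ys \<le> s" using False by (cases ys) (auto simp: s_def)
      then have "n - hd (ys @ [y]) = y + (s - hd ys)" using ns False by simp
      then show ?thesis using ns by (simp add: mn_snoc s_def power_add mult_ac)
    qed
    finally show ?thesis using Seq by (simp add: n_def)
  qed
qed


definition Lw :: "nat \<Rightarrow> (int \<Rightarrow> int) \<Rightarrow> int list" where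
  "Lw n w = map (\<lambda>i. w (int i)) [1..<Suc n]"

definition Wf :: "nat \<Rightarrow> int list \<Rightarrow> int \<Rightarrow> int" where
  "Wf n xs = (\<lambda>i. if 1 \<le> i \<and> i \<le> int n then xs ! nat (i - 1)
       else if - int n \<le> i \<and> i \<le> -1 then - (xs ! nat (- i - 1)) else i)"

lemma Lw_nth: "k < n \<Longrightarrow> Lw n w ! k = w (int k + 1)"
  by (simp add: Lw_def add.commute del: upt_Suc)

lemma length_Lw[simp]: "length (Lw n w) = n"
  by (simp add: Lw_def)

lemma sp_facts:
  assumes "w \<in> signed_perms n"
  shows "bij_betw w ({- int n .. int n} - {0}) ({- int n .. int n} - {0})"
    "\<And>i. w (- i) = - w i" "\<And>i. i \<notin> {- int n .. int n} - {0} \<Longrightarrow> w i = i" "w 0 = 0"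
  using assms by (auto simp: signed_perms_def)

lemma Lw_in:
  assumes w: "w \<in> signed_perms n"
  shows "Lw n w \<in> slists {1..int n}"
proof -
  let ?X = "{- int n .. int n} - {0}"
  note f = sp_facts[OF w]
  have inj: "inj_on w ?X" using f(1) by (simp add: bij_betw_def)
  have wX: "w i \<in> ?X" if "i \<in> ?X" for i using f(1) that by (auto simp: bij_betw_def)
  have sL: "set (Lw n w) = (\<lambda>i. w (int i)) ` {1..n}"
    by (auto simp: Lw_def simp del: upt_Suc)
  have "distinct (map abs (Lw n w))"
  proof -
    have "inj_on (\<lambda>i. \<bar>w (int i)\<bar>) {1..<Suc n}"
    proof (rule inj_onI)
      fix a b assume a: "a \<in> {1..<Suc n}" and b: "b \<in> {1..<Suc n}" and e: "\<bar>w (int a)\<bar> = \<bar>w (int b)\<bar>"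
      have aX: "int a \<in> ?X" and bX: "int b \<in> ?X" "- int b \<in> ?X" using a b by auto
      from e have "w (int a) = w (int b) \<or> w (int a) = w (- int b)" using f(2)[of "int b"] by (auto simp: abs_eq_iff)
      then have "int a = int b \<or> int a = - int b" using inj aX bX by (auto dest: inj_onD)
      then show "a = b" using a b by auto
    qed
    then show ?thesis by (simp add: Lw_def distinct_map comp_def del: upt_Suc)
  qed
  moreover have "abs ` set (Lw n w) = {1..int n}"
  proof (rule Set.set_eqI, rule iffI)
    fix v assume "v \<in> abs ` set (Lw n w)"
    then obtain i where i: "i \<in> {1..n}" "v = \<bar>w (int i)\<bar>" using sL by auto
    have "int i \<in> ?X" using i by auto
    then have "w (int i) \<in> ?X" by (rule wX)
    then show "v \<in> {1..int n}" using i by auto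
  next
    fix v assume v: "v \<in> {1..int n}"
    then have "v \<in> ?X" by auto
    then have "v \<in> w ` ?X" using f(1) by (simp add: bij_betw_def)
    then obtain c where c: "c \<in> ?X" "w c = v" by blast
    show "v \<in> abs ` set (Lw n w)"
    proof (cases "c > 0")
      case True
      then have "nat c \<in> {1..n}" "int (nat c) = c" using c by auto
      then have "w c \<in> set (Lw n w)" unfolding sL
        using image_eqI[of "w c" "\<lambda>i. w (int i)" "nat c"] by simp
      moreover have "v = \<bar>w c\<bar>" using c v by simp
      ultimately show ?thesis by blast
    next
      case False
      then have "c < 0" using c by auto
      have n1: "nat (- c) \<in> {1..n}" "int (nat (- c)) = - c" using c \<open>c < 0\<close> by auto
      have "w (- c) \<in> set (Lw n w)" unfolding sL
        using image_eqI[of "w (- c)" "\<lambda>i. w (int i)" "nat (- c)"] n1 by simp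
      moreover have "v = \<bar>w (- c)\<bar>" using f(2)[of c] c v by auto
      ultimately show ?thesis by blast
    qed
  qed
  ultimately show ?thesis by (simp add: slists_def)
qed

lemma Wf_in:
  assumes xs: "xs \<in> slists {1..int n}"
  shows "Wf n xs \<in> signed_perms n"
proof -
  let ?X = "{- int n .. int n} - {0}"
  let ?f = "Wf n xs"
  have lx: "length xs = n" using xs by (simp add: slists_def)
  have dm: "distinct (map abs xs)" using xs by (simp add: slists_def)
  have el: "\<bar>xs ! k\<bar> \<in> {1..int n}" if "k < n" for k
    using xs that lx by (force simp: slists_def)
  have fpos: "?f i = xs ! nat (i - 1)" if "1 \<le> i" "i \<le> int n" for i using that by (simp add: Wf_def)
  have fneg: "?f i = - (xs ! nat (- i - 1))" if "- int n \<le> i" "i \<le> -1" for i using that by (simp add: Wf_def)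
  have fout: "?f i = i" if "i \<notin> ?X" for i using that by (auto simp: Wf_def)
  have fabs: "\<bar>?f i\<bar> = \<bar>xs ! nat (\<bar>i\<bar> - 1)\<bar>" if "i \<in> ?X" for i
    using that by (cases "i > 0") (auto simp: Wf_def)
  have fX: "?f i \<in> ?X" if "i \<in> ?X" for i
  proof -
    have "nat (\<bar>i\<bar> - 1) < n" using that by auto
    then have "\<bar>?f i\<bar> \<in> {1..int n}" using el fabs[OF that] by simp
    then show ?thesis by auto
  qed
  have inj: "inj_on ?f ?X"
  proof (rule inj_onI)
    fix i j assume i: "i \<in> ?X" and j: "j \<in> ?X" and e: "?f i = ?f j"
    have "\<bar>xs ! nat (\<bar>i\<bar> - 1)\<bar> = \<bar>xs ! nat (\<bar>j\<bar> - 1)\<bar>" using fabs[OF i] fabs[OF j] e by simp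
    moreover have "nat (\<bar>i\<bar> - 1) < length xs" "nat (\<bar>j\<bar> - 1) < length xs" using i j lx by auto
    ultimately have "nat (\<bar>i\<bar> - 1) = nat (\<bar>j\<bar> - 1)" using dm by (auto simp: distinct_conv_nth)
    then have aij: "\<bar>i\<bar> = \<bar>j\<bar>" using i j by auto
    show "i = j"
    proof (rule ccontr)
      assume "i \<noteq> j"
      then have "j = - i" using aij by (auto simp: abs_eq_iff)
      then have "?f j = - ?f i" using i by (cases "i > 0") (auto simp: Wf_def)
      then have "?f i = 0" using e by simp
      then show False using fX[OF i] by simp
    qed
  qed
  have "?f ` ?X = ?X" using inj fX by (intro endo_inj_surj) auto
  then have "bij_betw ?f ?X ?X" using inj by (simp add: bij_betw_def)
  moreover have "\<forall>i. ?f (- i) = - ?f i" by (auto simp: Wf_def)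
  moreover have "\<forall>i. i \<notin> ?X \<longrightarrow> ?f i = i" using fout by blast
  ultimately show ?thesis by (simp add: signed_perms_def)
qed

lemma Lw_Wf: "xs \<in> slists {1..int n} \<Longrightarrow> Lw n (Wf n xs) = xs"
  by (rule nth_equalityI) (auto simp: slists_def Lw_nth Wf_def)

lemma Wf_Lw:
  assumes w: "w \<in> signed_perms n"
  shows "Wf n (Lw n w) = w"
proof
  fix i
  note f = sp_facts[OF w]
  show "Wf n (Lw n w) i = w i"
  proof (cases "1 \<le> i \<and> i \<le> int n")
    case True
    then have "nat (i - 1) < n" by auto
    then show ?thesis using True by (simp add: Wf_def Lw_nth)
  next
    case False
    show ?thesis
    proof (cases "- int n \<le> i \<and> i \<le> -1")
      case True
      then have "nat (- i - 1) < n" by auto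
      then have "Lw n w ! nat (- i - 1) = w (- i)" using True by (simp add: Lw_nth)
      then show ?thesis using True False f(2)[of i] by (simp add: Wf_def)
    next
      case False2: False
      then have "i \<notin> {- int n .. int n} - {0}" using False by auto
      then have "w i = i" by (rule f(3))
      moreover have "Wf n (Lw n w) i = i" unfolding Wf_def
        by (simp only: if_not_P[OF False] if_not_P[OF False2])
      ultimately show ?thesis by simp
    qed
  qed
qed

lemma bij_Lw: "bij_betw (Lw n) (signed_perms n) (slists {1..int n})"
  by (rule bij_betw_byWitness[where f' = "Wf n"]) (auto simp: Lw_in Wf_in Lw_Wf Wf_Lw)

lemma finite_sp: "finite (signed_perms n)"
  using bij_betw_finite[OF bij_Lw[of n]] finite_slists[of "{1..int n}"] by simp

lemma sdes_okd:
  assumes w: "w \<in> signed_perms n"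
  shows "sdes n w \<subseteq> S \<longleftrightarrow> okd S (Lw n w)"
proof -
  have h: "(0 # Lw n w) ! i = w (int i)" if "i < n" for i
  proof (cases i)
    case 0 then show ?thesis using sp_facts(4)[OF w] by simp
  next
    case (Suc j) then show ?thesis using that by (simp add: Lw_nth) (simp add: add.commute)
  qed
  show ?thesis unfolding okd_def sdes_def using h by (auto simp: Lw_nth not_less)
qed

lemma card_sdes_sub:
  "card {w \<in> signed_perms n. sdes n w \<subseteq> S} = card {xs \<in> slists {1..int n}. okd S xs}"
proof -
  have b: "bij_betw (Lw n) {w \<in> signed_perms n. sdes n w \<subseteq> S} {xs \<in> slists {1..int n}. okd S xs}"
  proof (rule bij_betw_byWitness[where f' = "Wf n"])
    show "\<forall>a\<in>{w \<in> signed_perms n. sdes n w \<subseteq> S}. Wf n (Lw n a) = a" by (auto simp: Wf_Lw)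
    show "\<forall>a'\<in>{xs \<in> slists {1..int n}. okd S xs}. Lw n (Wf n a') = a'" by (auto simp: Lw_Wf)
    show "Lw n ` {w \<in> signed_perms n. sdes n w \<subseteq> S} \<subseteq> {xs \<in> slists {1..int n}. okd S xs}"
      by (auto simp: Lw_in sdes_okd)
    show "Wf n ` {xs \<in> slists {1..int n}. okd S xs} \<subseteq> {w \<in> signed_perms n. sdes n w \<subseteq> S}"
      using sdes_okd[OF Wf_in] Lw_Wf by (auto simp: Wf_in)
  qed
  then show ?thesis by (rule bij_betw_same_card)
qed


lemma card_sdes_sub_sum:
  assumes "finite S"
  shows "int (card {w \<in> signed_perms n. sdes n w \<subseteq> S}) = (\<Sum>E\<in>Pow S. int (card {w \<in> signed_perms n. sdes n w = E}))"
proof -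
  have eq: "{w \<in> signed_perms n. sdes n w \<subseteq> S} = (\<Union>E\<in>Pow S. {w \<in> signed_perms n. sdes n w = E})"
    by auto
  have "card {w \<in> signed_perms n. sdes n w \<subseteq> S} = (\<Sum>E\<in>Pow S. card {w \<in> signed_perms n. sdes n w = E})"
    unfolding eq using assms finite_sp[of n] by (intro card_UN_disjoint) auto
  then show ?thesis by simp
qed

lemma ribbon_mobius:
  assumes "pseudo_comp n \<alpha>"
  shows "int (ribbonB n \<alpha>) = (\<Sum>T\<in>Pow (comp_des \<alpha>). (-1) ^ (card (comp_des \<alpha>) - card T) *
            int (card {w \<in> signed_perms n. sdes n w \<subseteq> T}))"
proof -
  have "int (card {w \<in> signed_perms n. sdes n w = comp_des \<alpha>}) =
     (\<Sum>T\<in>Pow (comp_des \<alpha>). (-1) ^ (card (comp_des \<alpha>) - card T) * int (card {w \<in> signed_perms n. sdes n w \<subseteq> T}))"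
    by (rule inclusion_exclusion_mobius[where g = "\<lambda>T. int (card {w \<in> signed_perms n. sdes n w \<subseteq> T})"])
       (auto simp: card_sdes_sub_sum)
  then show ?thesis by (simp add: ribbonB_def)
qed

lemma card_sdes_sub_pc:
  assumes "pseudo_comp n \<gamma>"
  shows "card {w \<in> signed_perms n. sdes n w \<subseteq> comp_des \<gamma>} = 2 ^ (n - hd \<gamma>) * mn \<gamma>"
proof -
  have "card {w \<in> signed_perms n. sdes n w \<subseteq> comp_des \<gamma>} = card {xs \<in> slists {1..int n}. okd (comp_des \<gamma>) xs}"
    by (rule card_sdes_sub)
  also have "\<dots> = 2 ^ (card {1..int n} - hd \<gamma>) * mn \<gamma>"
    using assms by (intro count_lists) (auto simp: pseudo_comp_ptl)
  finally show ?thesis by simp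
qed

lemma bij_comp_des_sub:
  assumes "D \<subseteq> {..<n}"
  shows "bij_betw comp_des {\<gamma>. pseudo_comp n \<gamma> \<and> comp_des \<gamma> \<subseteq> D} (Pow D)"
  unfolding bij_betw_def
proof
  show "inj_on comp_des {\<gamma>. pseudo_comp n \<gamma> \<and> comp_des \<gamma> \<subseteq> D}"
    by (auto intro: inj_onI comp_des_inj)
  show "comp_des ` {\<gamma>. pseudo_comp n \<gamma> \<and> comp_des \<gamma> \<subseteq> D} = Pow D"
  proof (rule subset_antisym)
    show "comp_des ` {\<gamma>. pseudo_comp n \<gamma> \<and> comp_des \<gamma> \<subseteq> D} \<subseteq> Pow D" by auto
    show "Pow D \<subseteq> comp_des ` {\<gamma>. pseudo_comp n \<gamma> \<and> comp_des \<gamma> \<subseteq> D}"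
    proof
      fix T assume "T \<in> Pow D"
      then have "T \<subseteq> {..<n}" using assms by auto
      then obtain \<gamma> where "pseudo_comp n \<gamma>" "comp_des \<gamma> = T" using comp_des_surj by blast
      then show "T \<in> comp_des ` {\<gamma>. pseudo_comp n \<gamma> \<and> comp_des \<gamma> \<subseteq> D}"
        using \<open>T \<in> Pow D\<close> by auto
    qed
  qed
qed

lemma ribbon_formula:
  assumes "pseudo_comp n \<alpha>"
  shows "int (ribbonB n \<alpha>) = (\<Sum>\<gamma>\<in>{\<gamma>. pseudo_comp n \<gamma> \<and> comp_des \<gamma> \<subseteq> comp_des \<alpha>}.
            (-1) ^ (card (comp_des \<alpha>) - card (comp_des \<gamma>)) * int (2 ^ (n - hd \<gamma>) * mn \<gamma>))"
proof -
  have b: "bij_betw comp_des {\<gamma>. pseudo_comp n \<gamma> \<and> comp_des \<gamma> \<subseteq> comp_des \<alpha>} (Pow (comp_des \<alpha>))"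
    using bij_comp_des_sub comp_des_sub[OF assms] by blast
  have "int (ribbonB n \<alpha>) = (\<Sum>T\<in>Pow (comp_des \<alpha>). (-1) ^ (card (comp_des \<alpha>) - card T) *
            int (card {w \<in> signed_perms n. sdes n w \<subseteq> T}))"
    by (rule ribbon_mobius[OF assms])
  also have "\<dots> = (\<Sum>\<gamma>\<in>{\<gamma>. pseudo_comp n \<gamma> \<and> comp_des \<gamma> \<subseteq> comp_des \<alpha>}.
        (-1) ^ (card (comp_des \<alpha>) - card (comp_des \<gamma>)) * int (card {w \<in> signed_perms n. sdes n w \<subseteq> comp_des \<gamma>}))"
    by (rule sum.reindex_bij_betw[OF b, symmetric])
  also have "\<dots> = (\<Sum>\<gamma>\<in>{\<gamma>. pseudo_comp n \<gamma> \<and> comp_des \<gamma> \<subseteq> comp_des \<alpha>}.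
            (-1) ^ (card (comp_des \<alpha>) - card (comp_des \<gamma>)) * int (2 ^ (n - hd \<gamma>) * mn \<gamma>))"
    by (intro sum.cong refl) (simp add: card_sdes_sub_pc)
  finally show ?thesis .
qed


definition dcond :: "nat \<Rightarrow> nat \<Rightarrow> nat \<Rightarrow> nat list \<Rightarrow> bool" where
  "dcond p k n \<gamma> \<longleftrightarrow> (\<forall>j\<le>k. (\<Sum>x\<leftarrow>\<gamma>. dig p x j) = dig p n j)"

definition Gw :: "nat \<Rightarrow> nat \<Rightarrow> nat \<Rightarrow> nat list \<Rightarrow> int" where
  "Gw p k n \<gamma> = (\<Prod>j\<le>k. 2 ^ (dig p n j - dig p (hd \<gamma>) j)
                * int (multinomial (dig p n j) (map (\<lambda>x. dig p x j) \<gamma>)))"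

lemma rBT_eq: "rBT p k n T = (\<Sum>\<beta>\<in>{\<beta>. pseudo_comp n \<beta> \<and> comp_des \<beta> \<subseteq> T \<and> dcond p k n \<beta>}.
     (-1) ^ (card T - card (comp_des \<beta>)) * Gw p k n \<beta>)"
  by (simp add: rBT_def dcond_def Gw_def)

lemma sum_list_sum_swap:
  "sum_list (map (\<lambda>x. \<Sum>i\<in>I. f x i) xs) = (\<Sum>i\<in>I. sum_list (map (\<lambda>x. f x i) xs))"
  by (induction xs) (auto simp: sum.distrib)

lemma sum_list_take_le: "sum_list (map (f::_ \<Rightarrow> nat) (take j xs)) \<le> sum_list (map f xs)"
proof -
  have "sum_list (map f xs) = sum_list (map f (take j xs)) + sum_list (map f (drop j xs))"
    by (metis append_take_drop_id map_append sum_list_append)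
  then show ?thesis by simp
qed

lemma A_mod:
  assumes "prime p" "odd p" "n < p ^ Suc k" "pseudo_comp n \<gamma>"
  shows "[int (2 ^ (n - hd \<gamma>) * mn \<gamma>) = (if dcond p k n \<gamma> then Gw p k n \<gamma> else 0)] (mod int p)"
proof -
  have p1: "1 < p" using assms prime_gt_1_nat by blast
  have sg: "sum_list \<gamma> = n" and ne: "\<gamma> \<noteq> []" using assms(4) by (auto simp: pseudo_comp_def)
  have L: "[int (mn \<gamma>) = (if dcond p k n \<gamma> then (\<Prod>j\<le>k. int (mn (map (\<lambda>x. dig p x j) \<gamma>))) else 0)] (mod int p)"
    using mn_lucas[OF assms(1), of \<gamma> k] sg assms(3) by (simp add: dcond_def)
  show ?thesis
  proof (cases "dcond p k n \<gamma>")
    case False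
    then have "[int (mn \<gamma>) = 0] (mod int p)" using L by simp
    then have "[int (2 ^ (n - hd \<gamma>)) * int (mn \<gamma>) = int (2 ^ (n - hd \<gamma>)) * 0] (mod int p)"
      by (intro cong_mult cong_refl)
    then show ?thesis using False by simp
  next
    case True
    obtain x rest where g: "\<gamma> = x # rest" using ne by (cases \<gamma>) auto
    have dx: "dig p x j \<le> dig p n j" if "j \<le> k" for j
      using True that by (auto simp: dcond_def g)
    have xn: "x \<le> n" using sg g by simp
    have nK: "n < p ^ Suc k" by (rule assms(3))
    have xK: "x < p ^ Suc k" using xn nK by linarith
    have "n - x = (\<Sum>j\<le>k. dig p n j * p ^ j) - (\<Sum>j\<le>k. dig p x j * p ^ j)"
      using dig_expansion[OF p1 nK] dig_expansion[OF p1 xK] by simp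
    also have "\<dots> = (\<Sum>j\<le>k. (dig p n j - dig p x j) * p ^ j)"
      using dx by (subst sum_subtractf_nat[symmetric]) (auto simp: diff_mult_distrib)
    finally have e: "n - x = (\<Sum>j\<le>k. (dig p n j - dig p x j) * p ^ j)" .
    have P2: "[(2::nat) ^ (n - hd \<gamma>) = (\<Prod>j\<le>k. 2 ^ (dig p n j - dig p (hd \<gamma>) j))] (mod p)"
      unfolding g using e pow2_digits[OF assms(1,2)] by simp
    then have P2': "[int (2 ^ (n - hd \<gamma>)) = (\<Prod>j\<le>k. 2 ^ (dig p n j - dig p (hd \<gamma>) j))] (mod int p)"
      using cong_int_iff[of "2 ^ (n - hd \<gamma>)" "\<Prod>j\<le>k. 2 ^ (dig p n j - dig p (hd \<gamma>) j)" p] by simp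
    have M: "int (mn (map (\<lambda>x. dig p x j) \<gamma>)) = int (multinomial (dig p n j) (map (\<lambda>x. dig p x j) \<gamma>))"
      if "j \<le> k" for j
    proof -
      have "sum_list (map (\<lambda>x. dig p x j) \<gamma>) = dig p n j" using True that by (simp add: dcond_def)
      then show ?thesis using multinomial_mn[of "map (\<lambda>x. dig p x j) \<gamma>"] by simp
    qed
    have "[int (2 ^ (n - hd \<gamma>) * mn \<gamma>) = (\<Prod>j\<le>k. 2 ^ (dig p n j - dig p (hd \<gamma>) j)) *
        (\<Prod>j\<le>k. int (mn (map (\<lambda>x. dig p x j) \<gamma>)))] (mod int p)"
      unfolding of_nat_mult using P2' L True by (intro cong_mult) auto
    also have "(\<Prod>j\<le>k. (2::int) ^ (dig p n j - dig p (hd \<gamma>) j)) * (\<Prod>j\<le>k. int (mn (map (\<lambda>x. dig p x j) \<gamma>)))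
       = Gw p k n \<gamma>"
      unfolding Gw_def prod.distrib[symmetric] by (intro prod.cong refl) (simp add: M)
    finally show ?thesis using True by simp
  qed
qed

lemma dc_sub_P:
  assumes "1 < p" "n < p ^ Suc k" "pseudo_comp n \<gamma>" "dcond p k n \<gamma>"
  shows "comp_des \<gamma> \<subseteq> Pset p k n"
proof
  fix d assume d: "d \<in> comp_des \<gamma>"
  then obtain j where j: "1 \<le> j" "j < length \<gamma>" "d = sum_list (take j \<gamma>)"
    by (auto simp: comp_des_def)
  have dn: "d < n" using comp_des_less[OF _ d] assms(3) by (auto simp: pseudo_comp_ptl)
  have sg: "sum_list \<gamma> = n" using assms(3) by (simp add: pseudo_comp_def)
  define b where "b = (\<lambda>i. \<Sum>x\<leftarrow>take j \<gamma>. dig p x i)"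
  have bl: "b i \<le> dig p n i" if "i \<le> k" for i
    using sum_list_take_le[of "\<lambda>x. dig p x i" j \<gamma>] assms(4) that by (simp add: b_def dcond_def)
  have xl: "x < p ^ Suc k" if "x \<in> set (take j \<gamma>)" for x
  proof -
    have "x \<in> set \<gamma>" using that by (meson in_set_takeD)
    then have "x \<le> n" using sg member_le_sum_list[of x \<gamma>] by simp
    then show ?thesis using assms(2) by linarith
  qed
  have "d = (\<Sum>x\<leftarrow>take j \<gamma>. \<Sum>i\<le>k. dig p x i * p ^ i)"
  proof -
    have "map (\<lambda>x. \<Sum>i\<le>k. dig p x i * p ^ i) (take j \<gamma>) = map (\<lambda>x. x) (take j \<gamma>)"
      using xl dig_expansion[OF assms(1)] by (intro map_cong refl) auto
    then show ?thesis using j by simp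
  qed
  also have "\<dots> = (\<Sum>i\<le>k. b i * p ^ i)"
    unfolding sum_list_sum_swap b_def by (simp add: sum_list_mult_const)
  finally have "d = (\<Sum>i\<le>k. b i * p ^ i)" .
  then show "d \<in> Pset p k n" using bl dn unfolding Pset_def by auto
qed

lemma ribbon_mod:
  assumes "prime p" "odd p" "n < p ^ Suc k" "pseudo_comp n \<alpha>"
  shows "[int (ribbonB n \<alpha>) = (-1) ^ card (comp_des \<alpha> - Pset p k n) * rBT p k n (comp_des \<alpha> \<inter> Pset p k n)] (mod int p)"
proof -
  have p1: "1 < p" using assms prime_gt_1_nat by blast
  let ?D = "comp_des \<alpha>"
  let ?P = "Pset p k n"
  let ?G = "{\<gamma>. pseudo_comp n \<gamma> \<and> comp_des \<gamma> \<subseteq> ?D}"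
  have fG: "finite ?G" using finite_pc[of n] by (rule finite_subset[rotated]) auto
  have "int (ribbonB n \<alpha>) = (\<Sum>\<gamma>\<in>?G. (-1) ^ (card ?D - card (comp_des \<gamma>)) * int (2 ^ (n - hd \<gamma>) * mn \<gamma>))"
    by (rule ribbon_formula[OF assms(4)])
  also have "[\<dots> = (\<Sum>\<gamma>\<in>?G. (-1) ^ (card ?D - card (comp_des \<gamma>)) * (if dcond p k n \<gamma> then Gw p k n \<gamma> else 0))] (mod int p)"
    by (intro cong_sum cong_mult cong_refl A_mod assms) auto
  also have "(\<Sum>\<gamma>\<in>?G. (-1) ^ (card ?D - card (comp_des \<gamma>)) * (if dcond p k n \<gamma> then Gw p k n \<gamma> else 0))
      = (\<Sum>\<gamma>\<in>{\<gamma>\<in>?G. dcond p k n \<gamma>}. (-1) ^ (card ?D - card (comp_des \<gamma>)) * Gw p k n \<gamma>)"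
  proof -
    have "(\<Sum>\<gamma>\<in>{\<gamma>\<in>?G. dcond p k n \<gamma>}. (-1) ^ (card ?D - card (comp_des \<gamma>)) * Gw p k n \<gamma>)
      = (\<Sum>\<gamma>\<in>?G. if dcond p k n \<gamma> then (-1) ^ (card ?D - card (comp_des \<gamma>)) * Gw p k n \<gamma> else 0)"
      by (rule sum.inter_filter[OF fG])
    also have "\<dots> = (\<Sum>\<gamma>\<in>?G. (-1) ^ (card ?D - card (comp_des \<gamma>)) * (if dcond p k n \<gamma> then Gw p k n \<gamma> else 0))"
      by (intro sum.cong refl) auto
    finally show ?thesis by (rule sym)
  qed
  also have "{\<gamma>\<in>?G. dcond p k n \<gamma>} = {\<gamma>. pseudo_comp n \<gamma> \<and> comp_des \<gamma> \<subseteq> ?D \<inter> ?P \<and> dcond p k n \<gamma>}"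
    using dc_sub_P[OF p1 assms(3)] by blast
  also have "(\<Sum>\<gamma>\<in>{\<gamma>. pseudo_comp n \<gamma> \<and> comp_des \<gamma> \<subseteq> ?D \<inter> ?P \<and> dcond p k n \<gamma>}. (-1) ^ (card ?D - card (comp_des \<gamma>)) * Gw p k n \<gamma>)
     = (\<Sum>\<gamma>\<in>{\<gamma>. pseudo_comp n \<gamma> \<and> comp_des \<gamma> \<subseteq> ?D \<inter> ?P \<and> dcond p k n \<gamma>}.
          (-1) ^ card (?D - ?P) * ((-1) ^ (card (?D \<inter> ?P) - card (comp_des \<gamma>)) * Gw p k n \<gamma>))"
  proof (intro sum.cong refl)
    fix \<gamma> assume "\<gamma> \<in> {\<gamma>. pseudo_comp n \<gamma> \<and> comp_des \<gamma> \<subseteq> ?D \<inter> ?P \<and> dcond p k n \<gamma>}"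
    then have sub: "comp_des \<gamma> \<subseteq> ?D \<inter> ?P" by simp
    have c1: "card ?D = card (?D - ?P) + card (?D \<inter> ?P)"
      by (metis Diff_Diff_Int Int_commute Int_lower2 card_Diff_subset finite_Int finite_comp_des
          card_mono le_add_diff_inverse2 card_Diff_subset_Int inf.cobounded1)
    have c2: "card (comp_des \<gamma>) \<le> card (?D \<inter> ?P)"
      using sub by (intro card_mono) auto
    have "card ?D - card (comp_des \<gamma>) = card (?D - ?P) + (card (?D \<inter> ?P) - card (comp_des \<gamma>))"
      using c1 c2 by simp
    then show "(-1) ^ (card ?D - card (comp_des \<gamma>)) * Gw p k n \<gamma> =
        (-1) ^ card (?D - ?P) * ((-1) ^ (card (?D \<inter> ?P) - card (comp_des \<gamma>)) * Gw p k n \<gamma>)"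
      by (simp add: power_add)
  qed
  also have "\<dots> = (-1) ^ card (?D - ?P) * rBT p k n (?D \<inter> ?P)"
    unfolding rBT_eq by (simp add: sum_distrib_left)
  finally show ?thesis .
qed


lemma Dom_eq:
  "{(\<Sum>j\<le>k. b j * p ^ j) | b. \<forall>j\<le>k. b j \<le> dig p n j}
     = (\<lambda>b. \<Sum>j\<le>k. b j * p ^ j) ` (PiE {..k} (\<lambda>j. {0..dig p n j}))"
proof (rule subset_antisym; rule subsetI)
  fix m assume "m \<in> {(\<Sum>j\<le>k. b j * p ^ j) | b. \<forall>j\<le>k. b j \<le> dig p n j}"
  then obtain b where b: "\<forall>j\<le>k. b j \<le> dig p n j" "m = (\<Sum>j\<le>k. b j * p ^ j)" by auto
  have "restrict b {..k} \<in> PiE {..k} (\<lambda>j. {0..dig p n j})" using b by auto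
  moreover have "m = (\<Sum>j\<le>k. restrict b {..k} j * p ^ j)" using b by simp
  ultimately show "m \<in> (\<lambda>b. \<Sum>j\<le>k. b j * p ^ j) ` (PiE {..k} (\<lambda>j. {0..dig p n j}))" by blast
next
  fix m assume "m \<in> (\<lambda>b. \<Sum>j\<le>k. b j * p ^ j) ` (PiE {..k} (\<lambda>j. {0..dig p n j}))"
  then obtain b where b: "b \<in> PiE {..k} (\<lambda>j. {0..dig p n j})" "m = (\<Sum>j\<le>k. b j * p ^ j)" by auto
  have "\<forall>j\<le>k. b j \<le> dig p n j" using b(1) by (auto simp: PiE_def Pi_def)
  then show "m \<in> {(\<Sum>j\<le>k. b j * p ^ j) | b. \<forall>j\<le>k. b j \<le> dig p n j}" using b(2) by blast
qed

lemma card_Dom: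
  assumes "1 < p"
  shows "card {(\<Sum>j\<le>k. b j * p ^ j) | b. \<forall>j\<le>k. b j \<le> dig p n j} = (\<Prod>j\<le>k. dig p n j + 1)"
proof -
  have "inj_on (\<lambda>b. \<Sum>j\<le>k. b j * p ^ j) (PiE {..k} (\<lambda>j. {0..dig p n j}))"
  proof (rule inj_onI)
    fix b c assume b: "b \<in> PiE {..k} (\<lambda>j. {0..dig p n j})" and c: "c \<in> PiE {..k} (\<lambda>j. {0..dig p n j})"
      and e: "(\<Sum>j\<le>k. b j * p ^ j) = (\<Sum>j\<le>k. c j * p ^ j)"
    have bl: "\<forall>j\<le>k. b j < p" using b dig_less[of p n] assms by (auto simp: PiE_def Pi_def) (meson le_less_trans)
    have cl: "\<forall>j\<le>k. c j < p" using c dig_less[of p n] assms by (auto simp: PiE_def Pi_def) (meson le_less_trans)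
    show "b = c"
    proof (rule PiE_ext[OF b c])
      fix i assume "i \<in> {..k}"
      then have i: "i \<le> k" by simp
      have "b i = dig p (\<Sum>j\<le>k. b j * p ^ j) i" using dig_unique[OF assms bl i] by simp
      also have "\<dots> = dig p (\<Sum>j\<le>k. c j * p ^ j) i" using e by simp
      also have "\<dots> = c i" using dig_unique[OF assms cl i] by simp
      finally show "b i = c i" .
    qed
  qed
  then have "card ((\<lambda>b. \<Sum>j\<le>k. b j * p ^ j) ` (PiE {..k} (\<lambda>j. {0..dig p n j}))) = card (PiE {..k} (\<lambda>j. {0..dig p n j}))"
    by (rule card_image)
  also have "\<dots> = (\<Prod>j\<le>k. dig p n j + 1)" by (simp add: card_PiE)
  finally show ?thesis unfolding Dom_eq .
qed

lemma n_in_Dom: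
  assumes "1 < p" "n < p ^ Suc k"
  shows "n \<in> {(\<Sum>j\<le>k. b j * p ^ j) | b. \<forall>j\<le>k. b j \<le> dig p n j}"
  using dig_expansion[OF assms] by blast

lemma Pset_sub:
  assumes "1 < p" "n < p ^ Suc k"
  shows "Pset p k n \<subseteq> {..<n}"
proof
  fix m assume "m \<in> Pset p k n"
  then obtain b where b: "\<forall>j\<le>k. b j \<le> dig p n j" "m = (\<Sum>j\<le>k. b j * p ^ j)" "m \<noteq> n"
    by (auto simp: Pset_def)
  have "m \<le> (\<Sum>j\<le>k. dig p n j * p ^ j)" using b by (auto intro!: sum_mono)
  then have "m \<le> n" using dig_expansion[OF assms] by simp
  then show "m \<in> {..<n}" using b by simp
qed

lemma card_Pset:
  assumes "1 < p" "n < p ^ Suc k"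
  shows "card (Pset p k n) = (\<Prod>j\<le>k. dig p n j + 1) - 1"
proof -
  have "finite {(\<Sum>j\<le>k. b j * p ^ j) | b. \<forall>j\<le>k. b j \<le> dig p n j}"
    unfolding Dom_eq by (intro finite_imageI finite_PiE) auto
  then show ?thesis unfolding Pset_def
    using card_Diff_singleton[OF n_in_Dom[OF assms]] card_Dom[OF assms(1)] by simp
qed

lemma dig_top:
  assumes "1 < p" "n < p ^ Suc k"
  shows "dig p n k = n div p ^ k"
proof -
  have "n div p ^ k < p" using assms by (simp add: div_less_iff_less_mult mult.commute)
  then show ?thesis by (simp add: dig_def)
qed

lemma Q_empty_iff:
  assumes "1 < p" "p ^ k \<le> n" "n < p ^ Suc k"
  shows "{..<n} - Pset p k n = {} \<longleftrightarrow> (\<forall>j<k. dig p n j = p - 1)"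
proof
  assume allm: "\<forall>j<k. dig p n j = p - 1"
  show "{..<n} - Pset p k n = {}"
  proof (rule ccontr)
    assume "{..<n} - Pset p k n \<noteq> {}"
    then obtain m where m: "m < n" "m \<notin> Pset p k n" by auto
    have mK: "m < p ^ Suc k" using m assms by linarith
    have "\<forall>j\<le>k. dig p m j \<le> dig p n j"
    proof (intro allI impI)
      fix j assume j: "j \<le> k"
      show "dig p m j \<le> dig p n j"
      proof (cases "j < k")
        case True
        then show ?thesis using allm dig_less[of p m j] assms(1) by simp
      next
        case False
        then have "j = k" using j by simp
        then show ?thesis using dig_top[OF assms(1) mK] dig_top[OF assms(1,3)] m
          by (simp add: div_le_mono)
      qed
    qed
    then have "m \<in> Pset p k n" using dig_expansion[OF assms(1) mK] m unfolding Pset_def by blast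
    then show False using m by simp
  qed
next
  assume Qe: "{..<n} - Pset p k n = {}"
  show "\<forall>j<k. dig p n j = p - 1"
  proof (rule ccontr)
    assume "\<not> (\<forall>j<k. dig p n j = p - 1)"
    then obtain j where j: "j < k" "dig p n j \<noteq> p - 1" by auto
    then have jl: "dig p n j < p - 1" using dig_less[of p n j] assms(1) by simp
    define t where "t = dig p n k"
    have t: "t = n div p ^ k" using dig_top[OF assms(1,3)] by (simp add: t_def)
    have "p ^ k div p ^ k \<le> n div p ^ k" using assms(2) by (rule div_le_mono)
    moreover have "p ^ k div p ^ k = 1" using assms(1) by simp
    ultimately have t1: "1 \<le> t" using t by simp
    have tp: "t < p" using dig_less[of p n k] assms(1) by (simp add: t_def)
    define e where "e = (\<lambda>i. (if i = j then p - 1 else 0) + (if i = k then t - 1 else 0))"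
    define m where "m = (\<Sum>i\<le>k. e i * p ^ i)"
    have el: "\<forall>i\<le>k. e i < p" using j tp assms(1) by (auto simp: e_def)
    have me: "m = (p - 1) * p ^ j + (t - 1) * p ^ k"
    proof -
      have "m = (\<Sum>i\<le>k. (if i = j then (p - 1) * p ^ j else 0) + (if i = k then (t - 1) * p ^ k else 0))"
        unfolding m_def e_def by (intro sum.cong refl) (auto simp: distrib_right)
      also have "\<dots> = (p - 1) * p ^ j + (t - 1) * p ^ k"
        using j by (simp add: sum.distrib)
      finally show ?thesis .
    qed
    have "(p - 1) * p ^ j < p ^ k"
    proof -
      have "(p - 1) * p ^ j < p * p ^ j" using assms(1) by simp
      also have "p * p ^ j = p ^ Suc j" by simp
      also have "\<dots> \<le> p ^ k" using j assms(1) by (intro power_increasing) auto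
      finally show ?thesis .
    qed
    then have "m < p ^ k + (t - 1) * p ^ k" using me by simp
    also have "\<dots> = t * p ^ k" using t1 by (simp add: algebra_simps)
    also have "\<dots> \<le> n" using t by simp
    finally have mn: "m < n" .
    have dm: "dig p m j = p - 1" unfolding m_def using dig_unique[OF assms(1) el, of j] j by (simp add: e_def)
    have "m \<in> Pset p k n" using Qe mn by auto
    then obtain b where b: "\<forall>i\<le>k. b i \<le> dig p n i" "m = (\<Sum>i\<le>k. b i * p ^ i)"
      by (auto simp: Pset_def)
    have bl: "\<forall>i\<le>k. b i < p" using b dig_less[of p n] assms(1) by (meson le_less_trans zero_less_one less_trans)
    have "dig p m j = b j" using b(2) dig_unique[OF assms(1) bl, of j] j by simp
    moreover have "b j \<le> dig p n j" using b(1) j by simp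
    ultimately show False using dm jl by simp
  qed
qed


lemma bij_betw_filter:
  assumes "bij_betw f A B"
  shows "bij_betw f {a\<in>A. R (f a)} {b\<in>B. R b}"
proof -
  have "inj_on f {a\<in>A. R (f a)}" using assms by (rule bij_betw_imp_inj_on[THEN inj_on_subset]) auto
  moreover have "f ` {a\<in>A. R (f a)} = {b\<in>B. R b}" using assms by (auto simp: bij_betw_def)
  ultimately show ?thesis by (simp add: bij_betw_def)
qed

lemma sum_if_const: "finite A \<Longrightarrow> (\<Sum>x\<in>A. if R x then (c::nat) else 0) = c * card {x\<in>A. R x}"
  by (simp add: sum.inter_filter[symmetric] mult.commute)

lemma even_odd_subsets:
  assumes "finite Q"
  shows "card {U. U \<subseteq> Q \<and> even (card U)} + card {U. U \<subseteq> Q \<and> odd (card U)} = 2 ^ card Q"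
    and "Q \<noteq> {} \<Longrightarrow> card {U. U \<subseteq> Q \<and> even (card U)} = card {U. U \<subseteq> Q \<and> odd (card U)}"
    and "Q = {} \<Longrightarrow> card {U. U \<subseteq> Q \<and> even (card U)} = 1 \<and> card {U. U \<subseteq> Q \<and> odd (card U)} = 0"
proof -
  have "Pow Q = {U. U \<subseteq> Q \<and> even (card U)} \<union> {U. U \<subseteq> Q \<and> odd (card U)}" by auto
  then have "card (Pow Q) = card {U. U \<subseteq> Q \<and> even (card U)} + card {U. U \<subseteq> Q \<and> odd (card U)}"
    using assms by (subst card_Un_disjoint[symmetric]) auto
  then show "card {U. U \<subseteq> Q \<and> even (card U)} + card {U. U \<subseteq> Q \<and> odd (card U)} = 2 ^ card Q"
    using assms by (simp add: card_Pow)
next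
  assume "Q \<noteq> {}"
  then have "{} \<subset> Q" by auto
  from card_subsupersets_even_odd[OF assms this]
  show "card {U. U \<subseteq> Q \<and> even (card U)} = card {U. U \<subseteq> Q \<and> odd (card U)}" by simp
next
  assume "Q = {}"
  then have e1: "{U. U \<subseteq> Q \<and> even (card U)} = {{}}" and e2: "{U. U \<subseteq> Q \<and> odd (card U)} = {}" by auto
  show "card {U. U \<subseteq> Q \<and> even (card U)} = 1 \<and> card {U. U \<subseteq> Q \<and> odd (card U)} = 0"
    unfolding e1 e2 by simp
qed

lemma card_sign_count:
  fixes v i :: int and m :: nat
  assumes "finite Q"
  shows "card {U \<in> Pow Q. [(-1) ^ card U * v = i] (mod m)} =
    (if [v = i] (mod m) then card {U. U \<subseteq> Q \<and> even (card U)} else 0) +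
    (if [v = - i] (mod m) then card {U. U \<subseteq> Q \<and> odd (card U)} else 0)"
proof -
  have iff: "[- v = i] (mod m) \<longleftrightarrow> [v = - i] (mod m)"
    using cong_minus_minus_iff[of v "- i" m] by simp
  have eq: "{U \<in> Pow Q. [(-1) ^ card U * v = i] (mod m)} =
     {U. U \<subseteq> Q \<and> even (card U) \<and> [v = i] (mod m)} \<union> {U. U \<subseteq> Q \<and> odd (card U) \<and> [v = - i] (mod m)}"
    using iff by (auto simp: minus_one_power_iff)
  have "card {U \<in> Pow Q. [(-1) ^ card U * v = i] (mod m)} =
     card {U. U \<subseteq> Q \<and> even (card U) \<and> [v = i] (mod m)} + card {U. U \<subseteq> Q \<and> odd (card U) \<and> [v = - i] (mod m)}"
    unfolding eq using assms by (subst card_Un_disjoint) auto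
  then show ?thesis by auto
qed

theorem theorem4p3:
  fixes p n k :: nat and i :: int
  assumes "prime p" and "odd p" and "2 \<le> n"
    and "p ^ k \<le> n" and "n < p ^ Suc k"
    and "0 \<le> i" and "i < int p"
  shows "int (cB p i n) =
     (if i = 0 \<or> (\<forall>j<k. dig p n j = p - 1)
      then 2 ^ (n + 1 - (\<Prod>j\<le>k. dig p n j + 1)) *
           int (card {T. T \<subseteq> Pset p k n \<and> [rBT p k n T = i] (mod int p)})
      else 2 ^ (n - (\<Prod>j\<le>k. dig p n j + 1)) *
           int (card {T. T \<subseteq> Pset p k n \<and>
                 ([rBT p k n T = i] (mod int p) \<or> [rBT p k n T = - i] (mod int p))}))"
proof -
  have p1: "1 < p" using assms(1) prime_gt_1_nat by blast
  define P where "P = Pset p k n"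
  define Q where "Q = {..<n} - P"
  define rv where "rv = rBT p k n"
  define Ev where "Ev = card {U. U \<subseteq> Q \<and> even (card U)}"
  define Od where "Od = card {U. U \<subseteq> Q \<and> odd (card U)}"
  define Pr where "Pr = (\<Prod>j\<le>k. dig p n j + 1)"
  define R where "R = (\<lambda>D. [(-1) ^ card (D - P) * rv (D \<inter> P) = i] (mod int p))"
  have Psub: "P \<subseteq> {..<n}" using Pset_sub[OF p1 assms(5)] by (simp add: P_def)
  have fP: "finite P" using Psub finite_subset by blast
  have fQ: "finite Q" by (simp add: Q_def)
  have cP: "card P = Pr - 1" using card_Pset[OF p1 assms(5)] by (simp add: P_def Pr_def)
  have Pi1: "Pr \<ge> 1" by (simp add: Pr_def Suc_le_eq prod_pos)
  have cPn: "card P \<le> n" using card_mono[OF _ Psub] by simp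
  have cQ: "card Q = n + 1 - Pr"
    using card_Diff_subset[OF fP Psub] cP Pi1 cPn by (simp add: Q_def)
  have Qe: "Q = {} \<longleftrightarrow> (\<forall>j<k. dig p n j = p - 1)"
    using Q_empty_iff[OF p1 assms(4,5)] by (simp add: Q_def P_def)
  have s1: "cB p i n = card {\<alpha>. pseudo_comp n \<alpha> \<and> R (comp_des \<alpha>)}"
  proof -
    have "{\<alpha>. pseudo_comp n \<alpha> \<and> [int (ribbonB n \<alpha>) = i] (mod int p)} = {\<alpha>. pseudo_comp n \<alpha> \<and> R (comp_des \<alpha>)}"
    proof (rule Collect_cong)
      fix \<alpha>
      show "(pseudo_comp n \<alpha> \<and> [int (ribbonB n \<alpha>) = i] (mod int p)) = (pseudo_comp n \<alpha> \<and> R (comp_des \<alpha>))"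
      proof (cases "pseudo_comp n \<alpha>")
        case True
        have c: "[int (ribbonB n \<alpha>) = (-1) ^ card (comp_des \<alpha> - P) * rv (comp_des \<alpha> \<inter> P)] (mod int p)"
          using ribbon_mod[OF assms(1,2,5) True] by (simp add: P_def rv_def)
        then show ?thesis unfolding R_def using True
          by (meson cong_sym cong_trans)
      qed simp
    qed
    then show ?thesis by (simp add: cB_def)
  qed
  have s2: "card {\<alpha>. pseudo_comp n \<alpha> \<and> R (comp_des \<alpha>)} = card {D \<in> Pow {..<n}. R D}"
  proof -
    have "{\<alpha>. pseudo_comp n \<alpha> \<and> R (comp_des \<alpha>)} = {a \<in> {\<alpha>. pseudo_comp n \<alpha>}. R (comp_des a)}" by simp
    moreover have "bij_betw comp_des {a \<in> {\<alpha>. pseudo_comp n \<alpha>}. R (comp_des a)} {D \<in> Pow {..<n}. R D}"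
      by (rule bij_betw_filter[OF bij_comp_des])
    ultimately show ?thesis by (simp add: bij_betw_same_card)
  qed
  let ?S = "Sigma (Pow P) (\<lambda>T. {U \<in> Pow Q. [(-1) ^ card U * rv T = i] (mod int p)})"
  have s3: "card {D \<in> Pow {..<n}. R D} = card ?S"
  proof (rule bij_betw_same_card[of "\<lambda>D. (D \<inter> P, D - P)"], rule bij_betw_byWitness[where f' = "\<lambda>(T, U). T \<union> U"])
    show "\<forall>D\<in>{D \<in> Pow {..<n}. R D}. (case (D \<inter> P, D - P) of (T, U) \<Rightarrow> T \<union> U) = D" by auto
    show "\<forall>TU\<in>?S. ((case TU of (T, U) \<Rightarrow> T \<union> U) \<inter> P, (case TU of (T, U) \<Rightarrow> T \<union> U) - P) = TU"
      by (auto simp: Q_def)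
    show "(\<lambda>D. (D \<inter> P, D - P)) ` {D \<in> Pow {..<n}. R D} \<subseteq> ?S"
      by (auto simp: R_def Q_def)
    show "(\<lambda>(T, U). T \<union> U) ` ?S \<subseteq> {D \<in> Pow {..<n}. R D}"
    proof
      fix D assume "D \<in> (\<lambda>(T, U). T \<union> U) ` ?S"
      then obtain T U where TU: "T \<subseteq> P" "U \<subseteq> Q" "[(-1) ^ card U * rv T = i] (mod int p)" "D = T \<union> U"
        by auto
      have "D \<inter> P = T" "D - P = U" using TU by (auto simp: Q_def)
      then show "D \<in> {D \<in> Pow {..<n}. R D}" using TU Psub by (auto simp: R_def Q_def)
    qed
  qed
  have s4: "card ?S = (\<Sum>T\<in>Pow P. (if [rv T = i] (mod int p) then Ev else 0) + (if [rv T = - i] (mod int p) then Od else 0))"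
  proof -
    have "card ?S = (\<Sum>T\<in>Pow P. card {U \<in> Pow Q. [(-1) ^ card U * rv T = i] (mod int p)})"
      using fP fQ by (intro card_SigmaI) auto
    also have "\<dots> = (\<Sum>T\<in>Pow P. (if [rv T = i] (mod int p) then Ev else 0) + (if [rv T = - i] (mod int p) then Od else 0))"
    proof (rule sum.cong[OF refl])
      fix T
      show "card {U \<in> Pow Q. [(-1) ^ card U * rv T = i] (mod int p)} =
         (if [rv T = i] (mod int p) then Ev else 0) + (if [rv T = - i] (mod int p) then Od else 0)"
        unfolding Ev_def Od_def by (rule card_sign_count[OF fQ])
    qed
    finally show ?thesis .
  qed
  define c1 where "c1 = card {T. T \<subseteq> P \<and> [rv T = i] (mod int p)}"
  define c2 where "c2 = card {T. T \<subseteq> P \<and> [rv T = - i] (mod int p)}"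
  have s5: "cB p i n = Ev * c1 + Od * c2"
  proof -
    have "cB p i n = (\<Sum>T\<in>Pow P. (if [rv T = i] (mod int p) then Ev else 0) + (if [rv T = - i] (mod int p) then Od else 0))"
      using s1 s2 s3 s4 by simp
    also have "\<dots> = Ev * card {T \<in> Pow P. [rv T = i] (mod int p)} + Od * card {T \<in> Pow P. [rv T = - i] (mod int p)}"
      using fP by (simp add: sum.distrib sum_if_const)
    finally show ?thesis by (simp add: c1_def c2_def)
  qed
  have EO: "Ev + Od = 2 ^ card Q" using even_odd_subsets(1)[OF fQ] by (simp add: Ev_def Od_def)
  show ?thesis
  proof (cases "\<forall>j<k. dig p n j = p - 1")
    case True
    then have "Q = {}" using Qe by simp
    then have "Ev = 1" "Od = 0" using even_odd_subsets(3)[OF fQ] by (auto simp: Ev_def Od_def)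
    moreover have "n + 1 - Pr = 0" using cQ \<open>Q = {}\<close> by simp
    ultimately show ?thesis using s5 True by (simp add: c1_def P_def rv_def Pr_def)
  next
    case False
    then have Qne: "Q \<noteq> {}" using Qe by simp
    then have "card Q \<ge> 1" using fQ by (simp add: Suc_le_eq card_gt_0_iff)
    obtain q where q: "card Q = Suc q" using \<open>card Q \<ge> 1\<close> by (cases "card Q") auto
    have eo: "Ev = Od" using even_odd_subsets(2)[OF fQ Qne] by (simp add: Ev_def Od_def)
    have EO2: "Ev = 2 ^ (card Q - 1)" "Od = 2 ^ (card Q - 1)" using EO eo q by simp_all
    show ?thesis
    proof (cases "i = 0")
      case True
      have "c2 = c1" using True by (simp add: c1_def c2_def)
      then have "cB p i n = (Ev + Od) * c1" using s5 by (simp add: add_mult_distrib)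
      then have "cB p i n = 2 ^ card Q * c1" using EO by simp
      then show ?thesis using True cQ by (simp add: c1_def P_def rv_def Pr_def)
    next
      case i0: False
      have disj: "\<not> ([v = i] (mod int p) \<and> [v = - i] (mod int p))" for v
      proof
        assume h: "[v = i] (mod int p) \<and> [v = - i] (mod int p)"
        then have "[i = - i] (mod int p)" by (meson cong_sym cong_trans)
        then have "int p dvd 2 * i" by (simp add: cong_iff_dvd_diff)
        moreover have "prime (int p)" using assms(1) by simp
        moreover have "\<not> int p dvd 2"
        proof
          assume "int p dvd 2"
          then have "int p \<le> 2" by (rule zdvd_imp_le) simp
          then have "p = 2" using p1 by simp
          then show False using assms(2) by simp
        qed
        ultimately have "int p dvd i" using prime_dvd_mult_iff by blast
        then have "int p \<le> i" using i0 assms(6) by (simp add: zdvd_imp_le)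
        then show False using assms(7) by simp
      qed
      have "c1 + c2 = card {T. T \<subseteq> P \<and> ([rv T = i] (mod int p) \<or> [rv T = - i] (mod int p))}"
      proof -
        have "{T. T \<subseteq> P \<and> ([rv T = i] (mod int p) \<or> [rv T = - i] (mod int p))}
            = {T. T \<subseteq> P \<and> [rv T = i] (mod int p)} \<union> {T. T \<subseteq> P \<and> [rv T = - i] (mod int p)}" by auto
        moreover have "{T. T \<subseteq> P \<and> [rv T = i] (mod int p)} \<inter> {T. T \<subseteq> P \<and> [rv T = - i] (mod int p)} = {}"
          using disj by auto
        ultimately show ?thesis using fP by (simp add: c1_def c2_def card_Un_disjoint)
      qed
      moreover have "cB p i n = 2 ^ (card Q - 1) * (c1 + c2)" using s5 EO2 by (simp add: algebra_simps)
      moreover have "card Q - 1 = n - Pr" using cQ by simp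
      ultimately have fin: "int (cB p i n) = 2 ^ (n - (\<Prod>j\<le>k. dig p n j + 1)) *
           int (card {T. T \<subseteq> Pset p k n \<and>
                 ([rBT p k n T = i] (mod int p) \<or> [rBT p k n T = - i] (mod int p))})"
        by (simp add: P_def rv_def Pr_def)
      have cnd: "\<not> (i = 0 \<or> (\<forall>j<k. dig p n j = p - 1))" using False i0 by simp
      show ?thesis unfolding if_not_P[OF cnd] by (rule fin)
    qed
  qed
qed


end
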